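(* Let $(X_i,D_i,Y_i)$, $i=1,\ldots,n$, be i.i.d. copies of $(X,D,Y)$, where $X=(X^{(1)},\ldots,X^{(p)})$ is a vector of real covariates, $D\in\{0,1\}$ is a binary treatment with $\omega=P(D=1)\in(0,1)$, and $Y$ is a real outcome; $p=p_n$ may grow with $n$. For $j=1,\ldots,p$ let $\rho_j=BCov^2(X^{(j)},Y\mid D)$ be the population conditional ball covariance and $\widehat\rho_j=BCov_n^2(X^{(j)},Y\mid D)$ its empirical version, and let $\mathcal{K}$ be the set of the $q$ indices $j$ with the largest values of $\widehat\rho_j$. Let $\mathcal{A}=\mathcal{C}\cup\mathcal{P}$ be the target adjustment set (confounders and precision variables). Assume: (A1) there exist constants $c>0$ and $0\le\kappa<1/2$ such that $\min_{j\in\mathcal{C}\cup\mathcal{P}}\rho_j\ge 2cn^{-\kappa}$; (A2) $\log(p)=o(n^{1-2\kappa})$. Let $W=\{j:\rho_j=0\}$ and assume $|W^c|\le q$, where $|\cdot|$ denotes cardinality. Then $P\big(\max_{j\in W}\widehat\rho_j<\min_{j\in\mathcal{A}}\widehat\rho_j\big)\to 1$ and hence $P\big((X^{\mathcal{C}}\cup X^{\mathcal{P}})\subset \mathcal{K}\big)\to1$ as $n\to\infty$.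
   Context: Ball covariance: for random elements $X,Y$ in metric spaces $(\mathcal{X},\rho)$, $(\mathcal{Y},\zeta)$ (here real lines with absolute-value distance), with joint law $\theta$ and marginals $\mu,\nu$, let $\overline B_\rho(x_1,x_2)$ be the closed ball centered at $x_1$ with radius $\rho(x_1,x_2)$ (similarly $\overline B_\zeta(y_1,y_2)$). Then $BCov^2(X,Y)=\int(\theta-\mu\otimes\nu)^2\{\overline B_\rho(x_1,x_2)\times\overline B_\zeta(y_1,y_2)\}\,\theta(dx_1,dy_1)\theta(dx_2,dy_2)$. Given a sample, let $\delta^X_{ij,k}=I\{X_k\in\overline B_\rho(X_i,X_j)\}$, $\delta^X_{ij,kl}=\delta^X_{ij,k}\delta^X_{ij,l}$, $\xi^X_{ij,klst}=(\delta^X_{ij,kl}+\delta^X_{ij,st}-\delta^X_{ij,ks}-\delta^X_{ij,lt})/2$, and similarly for $Y$. Conditional ball covariance: with $(X^{[d]},Y^{[d]})$ distributed as $(X,Y)$ given $D=d$, $BCov^2(X,Y\mid D)=\omega BCov^2(X^{[1]},Y^{[1]})+(1-\omega)BCov^2(X^{[0]},Y^{[0]})$. Empirical version: with $n_1=\sum_iD_i$, $n_0=n-n_1$, $\widehat\omega=n_1/n$, $BCov_n^2(X,Y\mid D)=\widehat\omega\, n_1^{-6}\sum_{(i,j,k,l,s,t):\,D_i=D_j=D_k=D_l=D_s=D_t=1}\xi^X_{ij,klst}\xi^Y_{ij,klst}+(1-\widehat\omega)\,n_0^{-6}\sum_{(i,j,k,l,s,t):\,D_i=\cdots=D_t=0}\xi^X_{ij,klst}\xi^Y_{ij,klst}$.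 Target set: the causal relationships among $(X,D,Y)$ are represented by a causal DAG; $pa(Y)$ denotes the parents of $Y$. The confounders are $X^{\mathcal{C}}=\{X^{(j)}\in pa(Y): D$ and $X^{(j)}$ are d-connected given $pa(Y)\setminus\{X^{(j)}\}\}$, the precision variables $X^{\mathcal{P}}$ are the remaining covariates in $pa(Y)$, and $\mathcal{A}=\mathcal{C}\cup\mathcal{P}$ (index sets). *)

theory Defs
  imports "HOL-Probability.Probability" "HOL-Library.Landau_Symbols"
begin

text \<open>One observation (X, D, Y): covariate vector (coordinates indexed by nat,
  only the first p are used), binary treatment D (True = 1), real outcome Y.\<close>
type_synonym obs = "(nat \<Rightarrow> real) \<times> bool \<times> real"

definition obs_space :: "obs measure" where
  "obs_space = (PiM UNIV (\<lambda>_::nat. (borel :: real measure))) \<Otimes>\<^sub>M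
               ((count_space UNIV :: bool measure) \<Otimes>\<^sub>M (borel :: real measure))"

definition bball :: "real \<Rightarrow> real \<Rightarrow> real set" where
  "bball a b = cball a (dist a b)"

definition bcov2 :: "(real \<times> real) measure \<Rightarrow> real" where
  "bcov2 \<theta> = (\<integral>u1. (\<integral>u2.
      (measure \<theta> (bball (fst u1) (fst u2) \<times> bball (snd u1) (snd u2))
       - measure \<theta> (bball (fst u1) (fst u2) \<times> UNIV)
         * measure \<theta> (UNIV \<times> bball (snd u1) (snd u2)))\<^sup>2 \<partial>\<theta>) \<partial>\<theta>)"

definition treat_prob :: "obs measure \<Rightarrow> real" where
  "treat_prob Q = measure Q {u \<in> space Q. fst (snd u)}"

definition cond_law :: "obs measure \<Rightarrow> nat \<Rightarrow> bool \<Rightarrow> (real \<times> real) measure" where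
  "cond_law Q j d = distr (uniform_measure Q {u \<in> space Q. fst (snd u) = d}) borel
                          (\<lambda>u. (fst u j, snd (snd u)))"

definition cbcov2 :: "obs measure \<Rightarrow> nat \<Rightarrow> real" where
  "cbcov2 Q j = treat_prob Q * bcov2 (cond_law Q j True)
              + (1 - treat_prob Q) * bcov2 (cond_law Q j False)"

definition bdelta :: "(nat \<Rightarrow> real) \<Rightarrow> nat \<Rightarrow> nat \<Rightarrow> nat \<Rightarrow> real" where
  "bdelta x i j k = (if x k \<in> bball (x i) (x j) then 1 else 0)"

definition bxi :: "(nat \<Rightarrow> real) \<Rightarrow> nat \<Rightarrow> nat \<Rightarrow> nat \<Rightarrow> nat \<Rightarrow> nat \<Rightarrow> nat \<Rightarrow> real" where
  "bxi x i j k l s t =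
     (bdelta x i j k * bdelta x i j l + bdelta x i j s * bdelta x i j t
      - bdelta x i j k * bdelta x i j s - bdelta x i j l * bdelta x i j t) / 2"

definition bcovn_grp :: "(nat \<Rightarrow> real) \<Rightarrow> (nat \<Rightarrow> real) \<Rightarrow> nat set \<Rightarrow> real" where
  "bcovn_grp x y I = (\<Sum>i\<in>I. \<Sum>j\<in>I. \<Sum>k\<in>I. \<Sum>l\<in>I. \<Sum>s\<in>I. \<Sum>t\<in>I.
        bxi x i j k l s t * bxi y i j k l s t) / real (card I) ^ 6"

definition cbcov2n :: "nat \<Rightarrow> (nat \<Rightarrow> obs) \<Rightarrow> nat \<Rightarrow> real" where
  "cbcov2n n S j =
     (let I1 = {i\<in>{..<n}. fst (snd (S i))};
          I0 = {i\<in>{..<n}. \<not> fst (snd (S i))};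
          w = real (card I1) / real n;
          x = (\<lambda>i. fst (S i) j);
          y = (\<lambda>i. snd (snd (S i)))
      in w * bcovn_grp x y I1 + (1 - w) * bcovn_grp x y I0)"

text \<open>K is a set of q indices (among 0..p-1) carrying the q largest values of r
  (any tie-breaking).\<close>
definition top_set :: "(nat \<Rightarrow> real) \<Rightarrow> nat \<Rightarrow> nat \<Rightarrow> nat set \<Rightarrow> bool" where
  "top_set r p q K \<longleftrightarrow> K \<subseteq> {..<p} \<and> card K = q \<and>
     (\<forall>j\<in>K. \<forall>i\<in>{..<p} - K. r i \<le> r j)"

end

theory Submission
  imports Defs
begin

lemma mcd_mgf:
  fixes M :: "'a measure" and f :: "(nat \<Rightarrow> 'a) \<Rightarrow> real"
  assumes M: "prob_space M" and l: "l > 0" and c: "c \<ge> 0"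
  shows "f \<in> borel_measurable (PiM {..<n} (\<lambda>_. M)) \<Longrightarrow>
     (\<And>x. x \<in> space (PiM {..<n} (\<lambda>_. M)) \<Longrightarrow> \<bar>f x\<bar> \<le> B) \<Longrightarrow>
     (\<And>x i y. x \<in> space (PiM {..<n} (\<lambda>_. M)) \<Longrightarrow> i < n \<Longrightarrow> y \<in> space M \<Longrightarrow> \<bar>f x - f (x(i:=y))\<bar> \<le> c) \<Longrightarrow>
     (\<integral>\<^sup>+x. ennreal (exp (l * (f x - (\<integral>x. f x \<partial>PiM {..<n} (\<lambda>_. M))))) \<partial>PiM {..<n} (\<lambda>_. M))
        \<le> ennreal (exp (l\<^sup>2 * (real n * c\<^sup>2) / 8))"
proof (induction n arbitrary: f B)
  case 0
  interpret P: prob_space "PiM {..<0::nat} (\<lambda>_. M)" by (intro prob_space_PiM M)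
  have sp: "space (PiM {..<0::nat} (\<lambda>_. M)) = {\<lambda>_. undefined}" by (simp add: space_PiM)
  have "(\<integral>x. f x \<partial>PiM {..<0::nat} (\<lambda>_. M)) = f (\<lambda>_. undefined)"
  proof -
    have "(\<integral>x. f x \<partial>PiM {..<0::nat} (\<lambda>_. M)) = (\<integral>x. f (\<lambda>_. undefined) \<partial>PiM {..<0::nat} (\<lambda>_. M))"
      by (intro Bochner_Integration.integral_cong) (auto simp: space_PiM)
    moreover have "measure (PiM ({}::nat set) (\<lambda>_. M)) (space (PiM ({}::nat set) (\<lambda>_. M))) = 1" using P.prob_space by simp
    ultimately show ?thesis by simp
  qed
  hence "(\<integral>\<^sup>+x. ennreal (exp (l * (f x - (\<integral>x. f x \<partial>PiM {..<0::nat} (\<lambda>_. M))))) \<partial>PiM {..<0::nat} (\<lambda>_. M))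
      = (\<integral>\<^sup>+x. ennreal 1 \<partial>PiM {..<0::nat} (\<lambda>_. M))"
    by (intro nn_integral_cong) (auto simp: space_PiM)
  also have "\<dots> = 1" using P.emeasure_space_1 by (simp del: lessThan_0)
  finally show ?case by simp
next
  case (Suc n)
  interpret M: prob_space M by fact
  interpret PS: product_prob_space "\<lambda>_. M" "UNIV" by unfold_locales
  let ?P = "PiM {..<n} (\<lambda>_. M)" and ?PS = "PiM {..<Suc n} (\<lambda>_. M)"
  interpret P: prob_space ?P by (intro prob_space_PiM M)
  interpret P2: prob_space ?PS by (intro prob_space_PiM M)
  have ins: "{..<Suc n} = insert n {..<n}" by auto
  have fm[measurable]: "f \<in> borel_measurable (PiM (insert n {..<n}) (\<lambda>_. M))" using Suc.prems(1) ins by simp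
  define g where "g x = (\<integral>y. f (x(n:=y)) \<partial>M)" for x
  have updm[measurable]: "(\<lambda>(x,y). x(n:=y)) \<in> measurable (?P \<Otimes>\<^sub>M M) (PiM (insert n {..<n}) (\<lambda>_. M))"
    using measurable_add_dim[of n "{..<n}" "\<lambda>_. M"] by simp
  have gm[measurable]: "g \<in> borel_measurable ?P"
    unfolding g_def by measurable
  have upd_sp: "x(n:=y) \<in> space ?PS" if "x \<in> space ?P" "y \<in> space M" for x y
    using that by (auto simp: space_PiM PiE_iff extensional_def)
  have fint: "integrable M (\<lambda>y. f (x(n:=y)))" if x: "x \<in> space ?P" for x
  proof (rule M.integrable_const_bound[where B=B])
    show "AE y in M. norm (f (x(n:=y))) \<le> B" by (rule AE_I2, simp only: real_norm_def, rule Suc.prems(2)[OF upd_sp[OF x]])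
    show "(\<lambda>y. f (x(n:=y))) \<in> borel_measurable M" using x by measurable
  qed
  have gB: "\<bar>g x\<bar> \<le> B" if x: "x \<in> space ?P" for x
  proof -
    have "\<bar>g x\<bar> \<le> (\<integral>y. \<bar>f (x(n:=y))\<bar> \<partial>M)" unfolding g_def by (rule integral_abs_bound)
    also have "\<dots> \<le> (\<integral>y. B \<partial>M)"
      by (intro integral_mono integrable_abs[OF fint[OF x]]) (auto intro: Suc.prems(2)[OF upd_sp[OF x]])
    finally show ?thesis by (simp add: M.prob_space)
  qed
  have gc: "\<bar>g x - g (x(i:=y))\<bar> \<le> c" if x: "x \<in> space ?P" and i: "i < n" and y: "y \<in> space M" for x i y
  proof -
    have xi: "x(i:=y) \<in> space ?P" using x y i by (auto simp: space_PiM PiE_iff extensional_def)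
    have "g x - g (x(i:=y)) = (\<integral>z. f (x(n:=z)) - f ((x(n:=z))(i:=y)) \<partial>M)"
    proof -
      have tw: "x(i := y, n := z) = x(n := z, i := y)" for z using i by (intro fun_upd_twist) simp
      show ?thesis unfolding g_def
        using Bochner_Integration.integral_diff[OF fint[OF x] fint[OF xi]] by (simp add: tw)
    qed
    also have "\<bar>\<dots>\<bar> \<le> (\<integral>z. \<bar>f (x(n:=z)) - f ((x(n:=z))(i:=y))\<bar> \<partial>M)" by (rule integral_abs_bound)
    also have "\<dots> \<le> (\<integral>z. c \<partial>M)"
    proof (intro integral_mono)
      show "integrable M (\<lambda>z. \<bar>f (x(n:=z)) - f ((x(n:=z))(i:=y))\<bar>)"
        using fint[OF x] fint[OF xi] i by (auto simp: fun_upd_twist)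
      show "\<bar>f (x(n:=z)) - f ((x(n:=z))(i:=y))\<bar> \<le> c" if "z \<in> space M" for z
        using i by (intro Suc.prems(3)[OF upd_sp[OF x that] _ y]) simp
    qed simp
    finally show ?thesis by (simp add: M.prob_space)
  qed
  have IH: "(\<integral>\<^sup>+x. ennreal (exp (l * (g x - (\<integral>x. g x \<partial>?P)))) \<partial>?P) \<le> ennreal (exp (l\<^sup>2 * (real n * c\<^sup>2) / 8))"
    by (rule Suc.IH[OF gm gB gc])
  have fint2: "integrable (PiM (insert n {..<n}) (\<lambda>_. M)) f"
  proof (rule P2.integrable_const_bound[where B=B, unfolded ins])
    show "AE x in PiM (insert n {..<n}) (\<lambda>_. M). norm (f x) \<le> B" using Suc.prems(2) ins by auto
  qed (rule fm)
  have Ef: "(\<integral>x. f x \<partial>?PS) = (\<integral>x. g x \<partial>?P)"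
    unfolding ins g_def by (rule PS.product_integral_insert[OF _ _ fint2]) auto
  define E where "E = (\<integral>x. g x \<partial>?P)"
  have inner: "(\<integral>\<^sup>+y. ennreal (exp (l * (f (x(n:=y)) - g x))) \<partial>M) \<le> ennreal (exp (l\<^sup>2 * c\<^sup>2 / 8))"
    if x: "x \<in> space ?P" for x
  proof -
    define a where "a = (INF y\<in>space M. f (x(n:=y)))"
    have bdd: "bdd_below ((\<lambda>y. f (x(n:=y))) ` space M)"
    proof (rule bdd_belowI[where m="-B"])
      fix t assume "t \<in> (\<lambda>y. f (x(n:=y))) ` space M"
      then obtain y where y: "y \<in> space M" and t: "t = f (x(n:=y))" by auto
      have "\<bar>f (x(n:=y))\<bar> \<le> B" by (rule Suc.prems(2)[OF upd_sp[OF x y]])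
      thus "-B \<le> t" unfolding t by linarith
    qed
    have ne: "space M \<noteq> {}" by (rule M.not_empty)
    have int: "f (x(n:=y)) \<in> {a..a+c}" if y: "y \<in> space M" for y
    proof -
      have 1: "a \<le> f (x(n:=y))" unfolding a_def using y bdd by (intro cINF_lower) auto
      have "f (x(n:=y)) - c \<le> f (x(n:=z))" if "z \<in> space M" for z
      proof -
        have "\<bar>f (x(n:=y)) - f ((x(n:=y))(n:=z))\<bar> \<le> c" by (rule Suc.prems(3)[OF upd_sp[OF x y] _ that]) simp
        thus ?thesis by simp
      qed
      hence "f (x(n:=y)) - c \<le> a" unfolding a_def using ne by (intro cINF_greatest) auto
      thus ?thesis using 1 by simp
    qed
    interpret B: interval_bounded_random_variable M "\<lambda>y. f (x(n:=y))" a "a+c"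
      by unfold_locales (use x int in auto)
    have "(\<integral>\<^sup>+y. ennreal (exp (l * (f (x(n:=y)) - g x))) \<partial>M) \<le> ennreal (exp (l\<^sup>2 * (a + c - a)\<^sup>2 / 8))"
      unfolding g_def by (rule B.Hoeffdings_lemma_nn_integral[OF l])
    thus ?thesis by simp
  qed
  have "(\<integral>\<^sup>+x. ennreal (exp (l * (f x - (\<integral>x. f x \<partial>?PS)))) \<partial>?PS)
      = (\<integral>\<^sup>+x. (\<integral>\<^sup>+y. ennreal (exp (l * (f (x(n:=y)) - E))) \<partial>M) \<partial>?P)"
  proof -
    have eq: "(\<integral>x. f x \<partial>?PS) = E" using Ef E_def by simp
    show ?thesis unfolding eq unfolding ins by (rule PS.product_nn_integral_insert) auto
  qed
  also have "\<dots> = (\<integral>\<^sup>+x. ennreal (exp (l * (g x - E))) * (\<integral>\<^sup>+y. ennreal (exp (l * (f (x(n:=y)) - g x))) \<partial>M) \<partial>?P)"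
    by (intro nn_integral_cong, subst nn_integral_cmult[symmetric])
       (auto intro!: nn_integral_cong simp: ennreal_mult'[symmetric] exp_add[symmetric] algebra_simps)
  also have "\<dots> \<le> (\<integral>\<^sup>+x. ennreal (exp (l * (g x - E))) * ennreal (exp (l\<^sup>2 * c\<^sup>2 / 8)) \<partial>?P)"
    by (intro nn_integral_mono mult_left_mono inner) auto
  also have "\<dots> = (\<integral>\<^sup>+x. ennreal (exp (l * (g x - E))) \<partial>?P) * ennreal (exp (l\<^sup>2 * c\<^sup>2 / 8))"
    by (rule nn_integral_multc) measurable
  also have "\<dots> \<le> ennreal (exp (l\<^sup>2 * (real n * c\<^sup>2) / 8)) * ennreal (exp (l\<^sup>2 * c\<^sup>2 / 8))"
    using IH unfolding E_def by (intro mult_right_mono) auto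
  also have "\<dots> = ennreal (exp (l\<^sup>2 * (real (Suc n) * c\<^sup>2) / 8))"
    by (simp add: ennreal_mult'[symmetric] exp_add[symmetric] algebra_simps add_divide_distrib)
  finally show ?case .
qed

lemma mcd_upper:
  fixes M :: "'a measure" and f :: "(nat \<Rightarrow> 'a) \<Rightarrow> real"
  assumes M: "prob_space M" and c: "c > 0" and n: "n > 0" and e: "\<epsilon> > 0"
    and fm: "f \<in> borel_measurable (PiM {..<n} (\<lambda>_. M))"
    and fB: "\<And>x. x \<in> space (PiM {..<n} (\<lambda>_. M)) \<Longrightarrow> \<bar>f x\<bar> \<le> B"
    and fc: "\<And>x i y. x \<in> space (PiM {..<n} (\<lambda>_. M)) \<Longrightarrow> i < n \<Longrightarrow> y \<in> space M \<Longrightarrow> \<bar>f x - f (x(i:=y))\<bar> \<le> c"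
  shows "measure (PiM {..<n} (\<lambda>_. M)) {x \<in> space (PiM {..<n} (\<lambda>_. M)). f x - (\<integral>x. f x \<partial>PiM {..<n} (\<lambda>_. M)) \<ge> \<epsilon>}
          \<le> exp (-2 * \<epsilon>\<^sup>2 / (real n * c\<^sup>2))"
proof -
  let ?P = "PiM {..<n} (\<lambda>_. M)"
  interpret P: prob_space ?P by (intro prob_space_PiM M)
  define E where "E = (\<integral>x. f x \<partial>?P)"
  define d where "d = real n * c\<^sup>2"
  have d: "d > 0" using n c by (simp add: d_def)
  define l where "l = 4 * \<epsilon> / d"
  have l: "l > 0" using e d by (simp add: l_def)
  have [measurable]: "f \<in> borel_measurable ?P" by (rule fm)
  have "emeasure ?P {x \<in> space ?P. f x - E \<ge> \<epsilon>}
     \<le> ennreal (exp (-l * \<epsilon>)) * (\<integral>\<^sup>+x. ennreal (exp (l * (f x - E))) * indicator (space ?P) x \<partial>?P)"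
    by (intro Chernoff_ineq_nn_integral_ge l) auto
  also have "(\<integral>\<^sup>+x. ennreal (exp (l * (f x - E))) * indicator (space ?P) x \<partial>?P) = (\<integral>\<^sup>+x. ennreal (exp (l * (f x - E))) \<partial>?P)"
    by (intro nn_integral_cong) simp
  also have "ennreal (exp (-l * \<epsilon>)) * \<dots> \<le> ennreal (exp (-l * \<epsilon>)) * ennreal (exp (l\<^sup>2 * d / 8))"
    unfolding E_def d_def by (intro mult_left_mono mcd_mgf[OF M l less_imp_le[OF c] fm fB fc]) auto
  also have "ennreal (exp (-l * \<epsilon>)) * ennreal (exp (l\<^sup>2 * d / 8)) = ennreal (exp (-2 * \<epsilon>\<^sup>2 / d))"
  proof -
    have "-l * \<epsilon> + l\<^sup>2 * d / 8 = -2 * \<epsilon>\<^sup>2 / d" using d by (simp add: l_def field_simps power2_eq_square)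
    thus ?thesis by (simp add: ennreal_mult'[symmetric] exp_add[symmetric])
  qed
  finally have "emeasure ?P {x \<in> space ?P. f x - E \<ge> \<epsilon>} \<le> ennreal (exp (-2 * \<epsilon>\<^sup>2 / d))" .
  thus ?thesis unfolding E_def d_def by (simp add: P.emeasure_eq_measure)
qed

lemma mcdiarmid:
  fixes M :: "'a measure" and f :: "(nat \<Rightarrow> 'a) \<Rightarrow> real"
  assumes M: "prob_space M" and c: "c > 0" and n: "n > 0" and e: "\<epsilon> > 0"
    and fm: "f \<in> borel_measurable (PiM {..<n} (\<lambda>_. M))"
    and fB: "\<And>x. x \<in> space (PiM {..<n} (\<lambda>_. M)) \<Longrightarrow> \<bar>f x\<bar> \<le> B"
    and fc: "\<And>x i y. x \<in> space (PiM {..<n} (\<lambda>_. M)) \<Longrightarrow> i < n \<Longrightarrow> y \<in> space M \<Longrightarrow> \<bar>f x - f (x(i:=y))\<bar> \<le> c"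
  shows "measure (PiM {..<n} (\<lambda>_. M)) {x \<in> space (PiM {..<n} (\<lambda>_. M)). \<bar>f x - (\<integral>x. f x \<partial>PiM {..<n} (\<lambda>_. M))\<bar> \<ge> \<epsilon>}
          \<le> 2 * exp (-2 * \<epsilon>\<^sup>2 / (real n * c\<^sup>2))"
proof -
  let ?P = "PiM {..<n} (\<lambda>_. M)"
  interpret P: prob_space ?P by (intro prob_space_PiM M)
  have [measurable]: "f \<in> borel_measurable ?P" by (rule fm)
  have fm': "(\<lambda>x. - f x) \<in> borel_measurable ?P" by measurable
  have "{x \<in> space ?P. \<bar>f x - (\<integral>x. f x \<partial>?P)\<bar> \<ge> \<epsilon>} =
        {x \<in> space ?P. f x - (\<integral>x. f x \<partial>?P) \<ge> \<epsilon>} \<union> {x \<in> space ?P. - f x - (\<integral>x. - f x \<partial>?P) \<ge> \<epsilon>}"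
    by auto
  also have "P.prob \<dots> \<le> P.prob {x \<in> space ?P. f x - (\<integral>x. f x \<partial>?P) \<ge> \<epsilon>} + P.prob {x \<in> space ?P. - f x - (\<integral>x. - f x \<partial>?P) \<ge> \<epsilon>}"
    by (intro measure_Un_le) auto
  also have "\<dots> \<le> exp (-2 * \<epsilon>\<^sup>2 / (real n * c\<^sup>2)) + exp (-2 * \<epsilon>\<^sup>2 / (real n * c\<^sup>2))"
  proof (intro add_mono mcd_upper[OF M c n e fm fB fc] mcd_upper[OF M c n e fm', where B=B])
    show "\<bar>- f x\<bar> \<le> B" if "x \<in> space ?P" for x using fB[OF that] by simp
    show "\<bar>- f x - - f (x(i := y))\<bar> \<le> c" if "x \<in> space ?P" "i < n" "y \<in> space M" for x i y
      using fc[OF that] by simp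
  qed
  finally show ?thesis by simp
qed

lemma abs_integral_le_bound:
  fixes f :: "'a \<Rightarrow> real"
  assumes M: "prob_space M" and B: "\<And>y. y \<in> space M \<Longrightarrow> \<bar>f y\<bar> \<le> B"
  shows "\<bar>\<integral>y. f y \<partial>M\<bar> \<le> B"
proof -
  interpret prob_space M by fact
  obtain y0 where "y0 \<in> space M" using not_empty by auto
  hence B0: "B \<ge> 0" using B[of y0] by linarith
  show ?thesis
  proof (cases "integrable M f")
    case True
    have "\<bar>\<integral>y. f y \<partial>M\<bar> \<le> (\<integral>y. \<bar>f y\<bar> \<partial>M)" by (rule integral_abs_bound)
    also have "\<dots> \<le> (\<integral>y. B \<partial>M)" using True B by (intro integral_mono) auto
    finally show ?thesis by (simp add: prob_space)
  next
    case False thus ?thesis using B0 by (simp add: not_integrable_integral_eq)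
  qed
qed

lemma integrable_bounded_prob:
  fixes f :: "'a \<Rightarrow> real"
  assumes M: "prob_space M" and fm: "f \<in> borel_measurable M" and B: "\<And>y. y \<in> space M \<Longrightarrow> \<bar>f y\<bar> \<le> B"
  shows "integrable M f"
proof -
  interpret prob_space M by fact
  show ?thesis by (rule integrable_const_bound[where B=B]) (use B fm in auto)
qed

lemma PiM_resample:
  fixes M :: "'a measure" and g :: "('i \<Rightarrow> 'a) \<Rightarrow> real"
  assumes M: "prob_space M" and I: "finite I" "i \<in> I"
    and gm: "g \<in> borel_measurable (PiM I (\<lambda>_. M))"
    and gB: "\<And>x. x \<in> space (PiM I (\<lambda>_. M)) \<Longrightarrow> \<bar>g x\<bar> \<le> B"
  shows "(\<integral>x. g x \<partial>PiM I (\<lambda>_. M)) = (\<integral>x. (\<integral>y. g (x(i:=y)) \<partial>M) \<partial>PiM I (\<lambda>_. M))"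
proof -
  interpret M: prob_space M by fact
  interpret PS: product_prob_space "\<lambda>_. M" "UNIV" by unfold_locales
  define I' where "I' = I - {i}"
  have II: "I = insert i I'" "i \<notin> I'" "finite I'" using I by (auto simp: I'_def)
  interpret P: prob_space "PiM I (\<lambda>_. M)" by (intro prob_space_PiM M)
  interpret P': prob_space "PiM I' (\<lambda>_. M)" by (intro prob_space_PiM M)
  have updm: "(\<lambda>(x,y). x(i:=y)) \<in> measurable (PiM I (\<lambda>_. M) \<Otimes>\<^sub>M M) (PiM I (\<lambda>_. M))"
    using measurable_add_dim[of i I "\<lambda>_. M"] I by (simp add: insert_absorb)
  have upd_sp: "x(i:=y) \<in> space (PiM I (\<lambda>_. M))" if "x \<in> space (PiM I (\<lambda>_. M))" "y \<in> space M" for x y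
    using that I by (auto simp: space_PiM PiE_iff extensional_def)
  have upd_sp': "x(i:=y) \<in> space (PiM I (\<lambda>_. M))" if "x \<in> space (PiM I' (\<lambda>_. M))" "y \<in> space M" for x y
    using that II by (auto simp: space_PiM PiE_iff extensional_def)
  define G where "G x = (\<integral>y. g (x(i:=y)) \<partial>M)" for x
  have "(\<lambda>(x,y). g (x(i:=y))) \<in> borel_measurable (PiM I (\<lambda>_. M) \<Otimes>\<^sub>M M)"
    using measurable_comp[OF updm gm] by (simp add: comp_def case_prod_beta')
  hence Gm: "G \<in> borel_measurable (PiM I (\<lambda>_. M))" unfolding G_def
    by (rule M.borel_measurable_lebesgue_integral[of "\<lambda>x y. g (x(i:=y))", simplified])
  have GB: "\<bar>G x\<bar> \<le> B" if "x \<in> space (PiM I (\<lambda>_. M))" for x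
    unfolding G_def by (rule abs_integral_le_bound[OF M]) (rule gB[OF upd_sp[OF that]])
  have gint: "integrable (PiM (insert i I') (\<lambda>_. M)) g"
    using integrable_bounded_prob[OF P.prob_space_axioms gm gB] II by simp
  have Gint: "integrable (PiM (insert i I') (\<lambda>_. M)) G"
    using integrable_bounded_prob[OF P.prob_space_axioms Gm GB] II by simp
  have "(\<integral>x. G x \<partial>PiM I (\<lambda>_. M)) = (\<integral>x. (\<integral>z. G (x(i:=z)) \<partial>M) \<partial>PiM I' (\<lambda>_. M))"
    unfolding II(1) by (rule PS.product_integral_insert[OF II(3) II(2) Gint])
  also have "\<dots> = (\<integral>x. (\<integral>z. (\<integral>y. g (x(i:=y)) \<partial>M) \<partial>M) \<partial>PiM I' (\<lambda>_. M))"
    unfolding G_def by simp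
  also have "\<dots> = (\<integral>x. (\<integral>y. g (x(i:=y)) \<partial>M) \<partial>PiM I' (\<lambda>_. M))"
    by (simp add: M.prob_space)
  also have "\<dots> = (\<integral>x. g x \<partial>PiM I (\<lambda>_. M))"
    unfolding II(1) by (rule PS.product_integral_insert[OF II(3) II(2) gint, symmetric])
  finally show ?thesis unfolding G_def by simp
qed

lemma meas6_compose:
  fixes h :: "'a \<Rightarrow> 'a \<Rightarrow> 'a \<Rightarrow> 'a \<Rightarrow> 'a \<Rightarrow> 'a \<Rightarrow> real"
  assumes hm: "(\<lambda>w. h (fst w) (fst (snd w)) (fst (snd (snd w))) (fst (snd (snd (snd w))))
                 (fst (snd (snd (snd (snd w))))) (snd (snd (snd (snd (snd w))))))
               \<in> borel_measurable (M \<Otimes>\<^sub>M (M \<Otimes>\<^sub>M (M \<Otimes>\<^sub>M (M \<Otimes>\<^sub>M (M \<Otimes>\<^sub>M M)))))"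
    and [measurable]: "f1 \<in> measurable N M" "f2 \<in> measurable N M" "f3 \<in> measurable N M"
      "f4 \<in> measurable N M" "f5 \<in> measurable N M" "f6 \<in> measurable N M"
  shows "(\<lambda>x. h (f1 x) (f2 x) (f3 x) (f4 x) (f5 x) (f6 x)) \<in> borel_measurable N"
proof -
  have "(\<lambda>x. (f1 x, f2 x, f3 x, f4 x, f5 x, f6 x)) \<in> measurable N (M \<Otimes>\<^sub>M (M \<Otimes>\<^sub>M (M \<Otimes>\<^sub>M (M \<Otimes>\<^sub>M (M \<Otimes>\<^sub>M M)))))"
    by measurable
  from measurable_comp[OF this hm] show ?thesis by (simp add: comp_def)
qed

lemma PiM_E6:
  fixes M :: "'a measure" and h :: "'a \<Rightarrow> 'a \<Rightarrow> 'a \<Rightarrow> 'a \<Rightarrow> 'a \<Rightarrow> 'a \<Rightarrow> real"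
  assumes M: "prob_space M" and I: "finite I"
    and dist: "distinct [i1,i2,i3,i4,i5,i6]" and sub: "{i1,i2,i3,i4,i5,i6} \<subseteq> I"
    and hm: "(\<lambda>w. h (fst w) (fst (snd w)) (fst (snd (snd w))) (fst (snd (snd (snd w))))
                 (fst (snd (snd (snd (snd w))))) (snd (snd (snd (snd (snd w))))))
               \<in> borel_measurable (M \<Otimes>\<^sub>M (M \<Otimes>\<^sub>M (M \<Otimes>\<^sub>M (M \<Otimes>\<^sub>M (M \<Otimes>\<^sub>M M)))))"
    and hB: "\<And>u1 u2 u3 u4 u5 u6. u1 \<in> space M \<Longrightarrow> u2 \<in> space M \<Longrightarrow> u3 \<in> space M \<Longrightarrow>
       u4 \<in> space M \<Longrightarrow> u5 \<in> space M \<Longrightarrow> u6 \<in> space M \<Longrightarrow> \<bar>h u1 u2 u3 u4 u5 u6\<bar> \<le> B"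
  shows "(\<integral>S. h (S i1) (S i2) (S i3) (S i4) (S i5) (S i6) \<partial>PiM I (\<lambda>_. M)) =
         (\<integral>u1. \<integral>u2. \<integral>u3. \<integral>u4. \<integral>u5. \<integral>u6. h u1 u2 u3 u4 u5 u6 \<partial>M \<partial>M \<partial>M \<partial>M \<partial>M \<partial>M)"
proof -
  interpret M: prob_space M by fact
  let ?P = "PiM I (\<lambda>_. M)"
  interpret P: prob_space ?P by (intro prob_space_PiM M)
  note hmr[measurable (raw)] = meas6_compose[OF hm]
  have ii: "i1 \<in> I" "i2 \<in> I" "i3 \<in> I" "i4 \<in> I" "i5 \<in> I" "i6 \<in> I" using sub by auto
  have sp: "S i \<in> space M" if "S \<in> space ?P" "i \<in> I" for S i using that by (auto simp: space_PiM)
  have [measurable]: "(\<lambda>S. S i) \<in> measurable ?P M" if "i \<in> I" for i using that by measurable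
  define g5 where "g5 u1 u2 u3 u4 u5 = (\<integral>u6. h u1 u2 u3 u4 u5 u6 \<partial>M)" for u1 u2 u3 u4 u5
  define g4 where "g4 u1 u2 u3 u4 = (\<integral>u5. g5 u1 u2 u3 u4 u5 \<partial>M)" for u1 u2 u3 u4
  define g3 where "g3 u1 u2 u3 = (\<integral>u4. g4 u1 u2 u3 u4 \<partial>M)" for u1 u2 u3
  define g2 where "g2 u1 u2 = (\<integral>u3. g3 u1 u2 u3 \<partial>M)" for u1 u2
  define g1 where "g1 u1 = (\<integral>u2. g2 u1 u2 \<partial>M)" for u1
  have B5: "\<bar>g5 u1 u2 u3 u4 u5\<bar> \<le> B" if "u1 \<in> space M" "u2 \<in> space M" "u3 \<in> space M" "u4 \<in> space M" "u5 \<in> space M" for u1 u2 u3 u4 u5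
    unfolding g5_def by (rule abs_integral_le_bound[OF M]) (rule hB, use that in auto)
  have B4: "\<bar>g4 u1 u2 u3 u4\<bar> \<le> B" if "u1 \<in> space M" "u2 \<in> space M" "u3 \<in> space M" "u4 \<in> space M" for u1 u2 u3 u4
    unfolding g4_def by (rule abs_integral_le_bound[OF M]) (rule B5, use that in auto)
  have B3: "\<bar>g3 u1 u2 u3\<bar> \<le> B" if "u1 \<in> space M" "u2 \<in> space M" "u3 \<in> space M" for u1 u2 u3
    unfolding g3_def by (rule abs_integral_le_bound[OF M]) (rule B4, use that in auto)
  have B2: "\<bar>g2 u1 u2\<bar> \<le> B" if "u1 \<in> space M" "u2 \<in> space M" for u1 u2
    unfolding g2_def by (rule abs_integral_le_bound[OF M]) (rule B3, use that in auto)
  have m6: "(\<lambda>S. h (S i1) (S i2) (S i3) (S i4) (S i5) (S i6)) \<in> borel_measurable ?P"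
    using ii by measurable
  have m5: "(\<lambda>S. g5 (S i1) (S i2) (S i3) (S i4) (S i5)) \<in> borel_measurable ?P"
    unfolding g5_def using ii by measurable
  have m4: "(\<lambda>S. g4 (S i1) (S i2) (S i3) (S i4)) \<in> borel_measurable ?P"
    unfolding g4_def g5_def using ii by measurable
  have m3: "(\<lambda>S. g3 (S i1) (S i2) (S i3)) \<in> borel_measurable ?P"
    unfolding g3_def g4_def g5_def using ii by measurable
  have m2: "(\<lambda>S. g2 (S i1) (S i2)) \<in> borel_measurable ?P"
    unfolding g2_def g3_def g4_def g5_def using ii by measurable
  have m1: "(\<lambda>S. g1 (S i1)) \<in> borel_measurable ?P"
    unfolding g1_def g2_def g3_def g4_def g5_def using ii by measurable
  have ne: "i1 \<noteq> i2" "i1 \<noteq> i3" "i1 \<noteq> i4" "i1 \<noteq> i5" "i1 \<noteq> i6"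
    "i2 \<noteq> i3" "i2 \<noteq> i4" "i2 \<noteq> i5" "i2 \<noteq> i6" "i3 \<noteq> i4" "i3 \<noteq> i5" "i3 \<noteq> i6"
    "i4 \<noteq> i5" "i4 \<noteq> i6" "i5 \<noteq> i6" using dist by auto
  note ne' = ne ne[symmetric]
  have "(\<integral>S. h (S i1) (S i2) (S i3) (S i4) (S i5) (S i6) \<partial>?P) =
        (\<integral>S. (\<integral>y. h ((S(i6:=y)) i1) ((S(i6:=y)) i2) ((S(i6:=y)) i3) ((S(i6:=y)) i4) ((S(i6:=y)) i5) ((S(i6:=y)) i6) \<partial>M) \<partial>?P)"
    by (rule PiM_resample[OF M I ii(6) m6, where B=B]) (intro hB; simp add: sp ii)
  also have "\<dots> = (\<integral>S. g5 (S i1) (S i2) (S i3) (S i4) (S i5) \<partial>?P)"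
    unfolding g5_def using ne' by simp
  also have "\<dots> = (\<integral>S. (\<integral>y. g5 ((S(i5:=y)) i1) ((S(i5:=y)) i2) ((S(i5:=y)) i3) ((S(i5:=y)) i4) ((S(i5:=y)) i5) \<partial>M) \<partial>?P)"
    by (rule PiM_resample[OF M I ii(5) m5, where B=B]) (intro B5; simp add: sp ii)
  also have "\<dots> = (\<integral>S. g4 (S i1) (S i2) (S i3) (S i4) \<partial>?P)"
    unfolding g4_def using ne' by simp
  also have "\<dots> = (\<integral>S. (\<integral>y. g4 ((S(i4:=y)) i1) ((S(i4:=y)) i2) ((S(i4:=y)) i3) ((S(i4:=y)) i4) \<partial>M) \<partial>?P)"
    by (rule PiM_resample[OF M I ii(4) m4, where B=B]) (intro B4; simp add: sp ii)
  also have "\<dots> = (\<integral>S. g3 (S i1) (S i2) (S i3) \<partial>?P)"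
    unfolding g3_def using ne' by simp
  also have "\<dots> = (\<integral>S. (\<integral>y. g3 ((S(i3:=y)) i1) ((S(i3:=y)) i2) ((S(i3:=y)) i3) \<partial>M) \<partial>?P)"
    by (rule PiM_resample[OF M I ii(3) m3, where B=B]) (intro B3; simp add: sp ii)
  also have "\<dots> = (\<integral>S. g2 (S i1) (S i2) \<partial>?P)"
    unfolding g2_def using ne' by simp
  also have "\<dots> = (\<integral>S. (\<integral>y. g2 ((S(i2:=y)) i1) ((S(i2:=y)) i2) \<partial>M) \<partial>?P)"
    by (rule PiM_resample[OF M I ii(2) m2, where B=B]) (intro B2; simp add: sp ii)
  also have "\<dots> = (\<integral>S. g1 (S i1) \<partial>?P)"
    unfolding g1_def using ne' by simp
  also have "\<dots> = (\<integral>S. (\<integral>y. g1 ((S(i1:=y)) i1) \<partial>M) \<partial>?P)"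
    by (rule PiM_resample[OF M I ii(1) m1, where B=B]) (unfold g1_def, rule abs_integral_le_bound[OF M], rule B2; simp add: sp ii)
  also have "\<dots> = (\<integral>y. g1 y \<partial>M)"
    by (simp add: P.prob_space)
  finally show ?thesis unfolding g1_def g2_def g3_def g4_def g5_def .
qed

definition Dv :: "bool \<Rightarrow> obs \<Rightarrow> real" where
  "Dv d u = (if fst (snd u) = d then 1 else 0)"

definition ind :: "real \<Rightarrow> real \<Rightarrow> real \<Rightarrow> real" where
  "ind a b c = (if c \<in> bball a b then 1 else 0)"

definition kern :: "nat \<Rightarrow> obs \<Rightarrow> obs \<Rightarrow> obs \<Rightarrow> obs \<Rightarrow> obs \<Rightarrow> obs \<Rightarrow> real" where
  "kern j u1 u2 u3 u4 u5 u6 =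
     bxi (\<lambda>m. fst ([u1,u2,u3,u4,u5,u6] ! m) j) 0 1 2 3 4 5 *
     bxi (\<lambda>m. snd (snd ([u1,u2,u3,u4,u5,u6] ! m))) 0 1 2 3 4 5"

definition kernD :: "bool \<Rightarrow> nat \<Rightarrow> obs \<Rightarrow> obs \<Rightarrow> obs \<Rightarrow> obs \<Rightarrow> obs \<Rightarrow> obs \<Rightarrow> real" where
  "kernD d j u1 u2 u3 u4 u5 u6 = Dv d u1 * Dv d u2 * Dv d u3 * Dv d u4 * Dv d u5 * Dv d u6 * kern j u1 u2 u3 u4 u5 u6"

lemma ind_eq: "ind a b c = indicator {c. dist a c \<le> dist a b} c"
  by (simp add: ind_def bball_def indicator_def)

lemma ind_01: "ind a b c = 0 \<or> ind a b c = 1" by (simp add: ind_def)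

lemma kern_eq:
  "kern j u1 u2 u3 u4 u5 u6 = 1/4 *
     ((ind (fst u1 j) (fst u2 j) (fst u3 j) - ind (fst u1 j) (fst u2 j) (fst u6 j)) *
      (ind (snd (snd u1)) (snd (snd u2)) (snd (snd u3)) - ind (snd (snd u1)) (snd (snd u2)) (snd (snd u6)))) *
     ((ind (fst u1 j) (fst u2 j) (fst u4 j) - ind (fst u1 j) (fst u2 j) (fst u5 j)) *
      (ind (snd (snd u1)) (snd (snd u2)) (snd (snd u4)) - ind (snd (snd u1)) (snd (snd u2)) (snd (snd u5))))"
  unfolding kern_def bxi_def bdelta_def ind_def
  by (simp add: algebra_simps numeral_eq_Suc)

lemma Dv_01: "Dv d u = 0 \<or> Dv d u = 1" by (simp add: Dv_def)

lemma abs_kern: "\<bar>kern j u1 u2 u3 u4 u5 u6\<bar> \<le> 1"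
proof -
  have a: "\<bar>ind a b c - ind a b c'\<bar> \<le> 1" for a b c c' using ind_01[of a b c] ind_01[of a b c'] by auto
  have "\<bar>kern j u1 u2 u3 u4 u5 u6\<bar> \<le> 1/4 * (1 * 1) * (1 * 1)"
    unfolding kern_eq abs_mult by (intro mult_mono a) auto
  thus ?thesis by simp
qed

lemma abs_kernD: "\<bar>kernD d j u1 u2 u3 u4 u5 u6\<bar> \<le> 1"
proof -
  have "\<bar>Dv d u\<bar> \<le> 1" for u using Dv_01[of d u] by auto
  hence "\<bar>kernD d j u1 u2 u3 u4 u5 u6\<bar> \<le> 1 * 1 * 1 * 1 * 1 * 1 * 1"
    unfolding kernD_def abs_mult by (intro mult_mono abs_kern) auto
  thus ?thesis by simp
qed

lemma lin1:
  fixes D a b :: "'a \<Rightarrow> real"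
  assumes M: "prob_space M" and [measurable]: "D \<in> borel_measurable M" "a \<in> borel_measurable M" "b \<in> borel_measurable M"
    and B: "\<And>u. u \<in> space M \<Longrightarrow> \<bar>D u\<bar> \<le> 1 \<and> \<bar>a u\<bar> \<le> 1 \<and> \<bar>b u\<bar> \<le> 1"
  shows "(\<integral>u. D u * (\<alpha> - a u) * (\<beta> - b u) \<partial>M) =
     \<alpha> * \<beta> * (\<integral>u. D u \<partial>M) - \<alpha> * (\<integral>u. D u * b u \<partial>M) - \<beta> * (\<integral>u. D u * a u \<partial>M) + (\<integral>u. D u * a u * b u \<partial>M)"
proof -
  have i1: "integrable M D" by (rule integrable_bounded_prob[OF M _, where B=1]) (use B in auto)
  have i2: "integrable M (\<lambda>u. D u * b u)"
    by (rule integrable_bounded_prob[OF M _, where B=1]) (use B in \<open>auto simp: abs_mult intro: mult_le_one\<close>)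
  have i3: "integrable M (\<lambda>u. D u * a u)"
    by (rule integrable_bounded_prob[OF M _, where B=1]) (use B in \<open>auto simp: abs_mult intro: mult_le_one\<close>)
  have i4: "integrable M (\<lambda>u. D u * a u * b u)"
  proof (rule integrable_bounded_prob[OF M _, where B=1])
    show "\<bar>D u * a u * b u\<bar> \<le> 1" if "u \<in> space M" for u
      using B[OF that] unfolding abs_mult by (auto intro!: mult_le_one)
  qed measurable
  have "(\<lambda>u. D u * (\<alpha> - a u) * (\<beta> - b u)) =
        (\<lambda>u. (\<alpha> * \<beta>) * D u - \<alpha> * (D u * b u) - \<beta> * (D u * a u) + D u * a u * b u)"
    by (auto simp: algebra_simps)
  thus ?thesis using i1 i2 i3 i4 by simp
qed

lemma lin2:
  fixes D a b :: "'a \<Rightarrow> real"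
  assumes M: "prob_space M" and [measurable]: "D \<in> borel_measurable M" "a \<in> borel_measurable M" "b \<in> borel_measurable M"
    and B: "\<And>u. u \<in> space M \<Longrightarrow> \<bar>D u\<bar> \<le> 1 \<and> \<bar>a u\<bar> \<le> 1 \<and> \<bar>b u\<bar> \<le> 1"
  shows "(\<integral>u. D u * (a u * b u * w - a u * mb - b u * ma + A) \<partial>M) =
     (\<integral>u. D u * a u * b u \<partial>M) * w - (\<integral>u. D u * a u \<partial>M) * mb - (\<integral>u. D u * b u \<partial>M) * ma + A * (\<integral>u. D u \<partial>M)"
proof -
  have i1: "integrable M D" by (rule integrable_bounded_prob[OF M _, where B=1]) (use B in auto)
  have i2: "integrable M (\<lambda>u. D u * b u)"
    by (rule integrable_bounded_prob[OF M _, where B=1]) (use B in \<open>auto simp: abs_mult intro: mult_le_one\<close>)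
  have i3: "integrable M (\<lambda>u. D u * a u)"
    by (rule integrable_bounded_prob[OF M _, where B=1]) (use B in \<open>auto simp: abs_mult intro: mult_le_one\<close>)
  have i4: "integrable M (\<lambda>u. D u * a u * b u)"
  proof (rule integrable_bounded_prob[OF M _, where B=1])
    show "\<bar>D u * a u * b u\<bar> \<le> 1" if "u \<in> space M" for u
      using B[OF that] unfolding abs_mult by (auto intro!: mult_le_one)
  qed measurable
  have "(\<lambda>u. D u * (a u * b u * w - a u * mb - b u * ma + A)) =
        (\<lambda>u. (D u * a u * b u) * w - (D u * a u) * mb - (D u * b u) * ma + A * D u)"
    by (auto simp: algebra_simps)
  thus ?thesis using i1 i2 i3 i4 by simp
qed

locale pm =
  fixes Q :: "obs measure" and j :: nat and d :: bool
  assumes prob: "prob_space Q" and sQ: "sets Q = sets obs_space"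
begin

sublocale Q: prob_space Q by (rule prob)

lemma mX[measurable]: "(\<lambda>u. fst u j) \<in> borel_measurable Q"
  unfolding measurable_cong_sets[OF sQ refl] obs_space_def by measurable

lemma mY[measurable]: "(\<lambda>u. snd (snd u)) \<in> borel_measurable Q"
  unfolding measurable_cong_sets[OF sQ refl] obs_space_def by measurable

lemma mD[measurable]: "(\<lambda>u. fst (snd u)) \<in> measurable Q (count_space UNIV)"
  unfolding measurable_cong_sets[OF sQ refl] obs_space_def by measurable

lemma mDv[measurable]: "Dv d \<in> borel_measurable Q"
  unfolding Dv_def by measurable

definition "aa u1 u2 u = ind (fst u1 j) (fst u2 j) (fst u j)"
definition "bb u1 u2 u = ind (snd (snd u1)) (snd (snd u2)) (snd (snd u))"
definition "W = (\<integral>u. Dv d u \<partial>Q)"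
definition "MA u1 u2 = (\<integral>u. Dv d u * aa u1 u2 u \<partial>Q)"
definition "MB u1 u2 = (\<integral>u. Dv d u * bb u1 u2 u \<partial>Q)"
definition "AB u1 u2 = (\<integral>u. Dv d u * aa u1 u2 u * bb u1 u2 u \<partial>Q)"
definition "FF u1 u2 \<alpha> \<beta> = \<alpha> * \<beta> * W - \<alpha> * MB u1 u2 - \<beta> * MA u1 u2 + AB u1 u2"

lemma maa[measurable]: "aa u1 u2 \<in> borel_measurable Q"
  unfolding aa_def ind_eq by measurable
lemma mbb[measurable]: "bb u1 u2 \<in> borel_measurable Q"
  unfolding bb_def ind_eq by measurable

lemma bnd3: "\<bar>Dv d u\<bar> \<le> 1 \<and> \<bar>aa u1 u2 u\<bar> \<le> 1 \<and> \<bar>bb u1 u2 u\<bar> \<le> 1"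
  using Dv_01[of d u] ind_01 unfolding aa_def bb_def by (metis abs_0 abs_1 order_refl zero_le_one)

lemma step1: "(\<integral>u. Dv d u * (\<alpha> - aa u1 u2 u) * (\<beta> - bb u1 u2 u) \<partial>Q) = FF u1 u2 \<alpha> \<beta>"
  unfolding FF_def W_def MA_def MB_def AB_def
  by (rule lin1[OF prob mDv maa mbb bnd3])

lemma step2: "(\<integral>u. Dv d u * FF u1 u2 (aa u1 u2 u) (bb u1 u2 u) \<partial>Q) = 2 * (AB u1 u2 * W - MA u1 u2 * MB u1 u2)"
proof -
  have "(\<integral>u. Dv d u * FF u1 u2 (aa u1 u2 u) (bb u1 u2 u) \<partial>Q) =
    (\<integral>u. Dv d u * (aa u1 u2 u * bb u1 u2 u * W - aa u1 u2 u * MB u1 u2 - bb u1 u2 u * MA u1 u2 + AB u1 u2) \<partial>Q)"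
    unfolding FF_def by simp
  also have "\<dots> = AB u1 u2 * W - MA u1 u2 * MB u1 u2 - MB u1 u2 * MA u1 u2 + AB u1 u2 * W"
    unfolding W_def MA_def MB_def AB_def by (rule lin2[OF prob mDv maa mbb bnd3])
  finally show ?thesis by (simp add: algebra_simps)
qed

lemma chain:
  "(\<integral>u1. \<integral>u2. \<integral>u3. \<integral>u4. \<integral>u5. \<integral>u6. kernD d j u1 u2 u3 u4 u5 u6 \<partial>Q \<partial>Q \<partial>Q \<partial>Q \<partial>Q \<partial>Q) =
   (\<integral>u1. \<integral>u2. Dv d u1 * Dv d u2 * (AB u1 u2 * W - MA u1 u2 * MB u1 u2)\<^sup>2 \<partial>Q \<partial>Q)"
proof -
  have s6: "(\<integral>u6. kernD d j u1 u2 u3 u4 u5 u6 \<partial>Q) =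
    (Dv d u1 * Dv d u2 * Dv d u3 * Dv d u4 * Dv d u5 / 4 * ((aa u1 u2 u4 - aa u1 u2 u5) * (bb u1 u2 u4 - bb u1 u2 u5))) *
    FF u1 u2 (aa u1 u2 u3) (bb u1 u2 u3)" for u1 u2 u3 u4 u5
  proof -
    have "(\<integral>u6. kernD d j u1 u2 u3 u4 u5 u6 \<partial>Q) = (\<integral>u6.
      (Dv d u1 * Dv d u2 * Dv d u3 * Dv d u4 * Dv d u5 / 4 * ((aa u1 u2 u4 - aa u1 u2 u5) * (bb u1 u2 u4 - bb u1 u2 u5))) *
      (Dv d u6 * (aa u1 u2 u3 - aa u1 u2 u6) * (bb u1 u2 u3 - bb u1 u2 u6)) \<partial>Q)"
      unfolding kernD_def kern_eq aa_def bb_def by (intro Bochner_Integration.integral_cong) (auto simp: algebra_simps)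
    also have "\<dots> = (Dv d u1 * Dv d u2 * Dv d u3 * Dv d u4 * Dv d u5 / 4 * ((aa u1 u2 u4 - aa u1 u2 u5) * (bb u1 u2 u4 - bb u1 u2 u5))) *
      FF u1 u2 (aa u1 u2 u3) (bb u1 u2 u3)"
      by (simp only: integral_mult_right_zero step1)
    finally show ?thesis .
  qed
  have s5: "(\<integral>u5. \<integral>u6. kernD d j u1 u2 u3 u4 u5 u6 \<partial>Q \<partial>Q) =
    (Dv d u1 * Dv d u2 * Dv d u3 * Dv d u4 / 4 * FF u1 u2 (aa u1 u2 u3) (bb u1 u2 u3)) * FF u1 u2 (aa u1 u2 u4) (bb u1 u2 u4)" for u1 u2 u3 u4
  proof -
    have "(\<integral>u5. \<integral>u6. kernD d j u1 u2 u3 u4 u5 u6 \<partial>Q \<partial>Q) = (\<integral>u5.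
      (Dv d u1 * Dv d u2 * Dv d u3 * Dv d u4 / 4 * FF u1 u2 (aa u1 u2 u3) (bb u1 u2 u3)) *
      (Dv d u5 * (aa u1 u2 u4 - aa u1 u2 u5) * (bb u1 u2 u4 - bb u1 u2 u5)) \<partial>Q)"
      unfolding s6 by (intro Bochner_Integration.integral_cong) (auto simp: algebra_simps)
    also have "\<dots> = (Dv d u1 * Dv d u2 * Dv d u3 * Dv d u4 / 4 * FF u1 u2 (aa u1 u2 u3) (bb u1 u2 u3)) * FF u1 u2 (aa u1 u2 u4) (bb u1 u2 u4)"
      by (simp only: integral_mult_right_zero step1)
    finally show ?thesis .
  qed
  have s4: "(\<integral>u4. \<integral>u5. \<integral>u6. kernD d j u1 u2 u3 u4 u5 u6 \<partial>Q \<partial>Q \<partial>Q) =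
    (Dv d u1 * Dv d u2 * Dv d u3 / 4 * FF u1 u2 (aa u1 u2 u3) (bb u1 u2 u3)) * (2 * (AB u1 u2 * W - MA u1 u2 * MB u1 u2))" for u1 u2 u3
  proof -
    have "(\<integral>u4. \<integral>u5. \<integral>u6. kernD d j u1 u2 u3 u4 u5 u6 \<partial>Q \<partial>Q \<partial>Q) = (\<integral>u4.
      (Dv d u1 * Dv d u2 * Dv d u3 / 4 * FF u1 u2 (aa u1 u2 u3) (bb u1 u2 u3)) *
      (Dv d u4 * FF u1 u2 (aa u1 u2 u4) (bb u1 u2 u4)) \<partial>Q)"
      unfolding s5 by (intro Bochner_Integration.integral_cong) (auto simp: algebra_simps)
    also have "\<dots> = (Dv d u1 * Dv d u2 * Dv d u3 / 4 * FF u1 u2 (aa u1 u2 u3) (bb u1 u2 u3)) * (2 * (AB u1 u2 * W - MA u1 u2 * MB u1 u2))"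
      by (simp only: integral_mult_right_zero step2)
    finally show ?thesis .
  qed
  have s3: "(\<integral>u3. \<integral>u4. \<integral>u5. \<integral>u6. kernD d j u1 u2 u3 u4 u5 u6 \<partial>Q \<partial>Q \<partial>Q \<partial>Q) =
    Dv d u1 * Dv d u2 * (AB u1 u2 * W - MA u1 u2 * MB u1 u2)\<^sup>2" for u1 u2
  proof -
    have "(\<integral>u3. \<integral>u4. \<integral>u5. \<integral>u6. kernD d j u1 u2 u3 u4 u5 u6 \<partial>Q \<partial>Q \<partial>Q \<partial>Q) = (\<integral>u3.
      (Dv d u1 * Dv d u2 / 2 * (AB u1 u2 * W - MA u1 u2 * MB u1 u2)) *
      (Dv d u3 * FF u1 u2 (aa u1 u2 u3) (bb u1 u2 u3)) \<partial>Q)"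
      unfolding s4 by (intro Bochner_Integration.integral_cong) (simp_all add: field_simps)
    also have "\<dots> = (Dv d u1 * Dv d u2 / 2 * (AB u1 u2 * W - MA u1 u2 * MB u1 u2)) * (2 * (AB u1 u2 * W - MA u1 u2 * MB u1 u2))"
      by (simp only: integral_mult_right_zero step2)
    finally show ?thesis by (simp add: power2_eq_square algebra_simps)
  qed
  show ?thesis unfolding s3 ..
qed

end

locale pmW = pm +
  assumes Wpos: "measure Q {u \<in> space Q. fst (snd u) = d} > 0"
begin

definition "Sd = {u \<in> space Q. fst (snd u) = d}"
definition "fj u = (fst u j, snd (snd u))"
abbreviation "\<theta> \<equiv> cond_law Q j d"

lemma Sd_sets[measurable]: "Sd \<in> sets Q" unfolding Sd_def by measurable

lemma W_eq: "W = measure Q Sd"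
proof -
  have "W = (\<integral>u. indicator Sd u \<partial>Q)" unfolding W_def Dv_def Sd_def
    by (intro Bochner_Integration.integral_cong) (auto simp: indicator_def)
  thus ?thesis by (simp add: Sd_def)
qed

lemma W_pos: "W > 0" using Wpos by (simp add: W_eq Sd_def)

lemma mfj[measurable]: "fj \<in> measurable Q borel"
proof -
  have "fj \<in> measurable Q (borel \<Otimes>\<^sub>M borel)" unfolding fj_def by measurable
  thus ?thesis by (simp add: borel_prod)
qed

lemma theta_def': "\<theta> = distr (uniform_measure Q Sd) borel fj"
  unfolding cond_law_def Sd_def fj_def ..

lemma sets_theta: "sets \<theta> = sets (borel \<Otimes>\<^sub>M borel)"
  by (simp add: theta_def') (metis borel_prod)

lemma space_theta: "space \<theta> = UNIV"
  by (simp add: theta_def')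

lemma prob_theta: "prob_space \<theta>"
proof -
  have "prob_space (uniform_measure Q Sd)"
    by (rule prob_space_uniform_measure) (use Wpos in \<open>auto simp: Sd_def Q.emeasure_eq_measure\<close>)
  then show ?thesis unfolding theta_def' by (intro prob_space.prob_space_distr) auto
qed

lemma T1:
  fixes g :: "real \<times> real \<Rightarrow> real"
  assumes gm: "g \<in> borel_measurable borel"
  shows "(\<integral>u. Dv d u * g (fj u) \<partial>Q) = W * (\<integral>v. g v \<partial>\<theta>)"
proof -
  have [measurable]: "g \<in> borel_measurable borel" by (rule gm)
  have um: "uniform_measure Q Sd = density Q (\<lambda>u. ennreal (indicator Sd u / W))"
    unfolding uniform_measure_def
  proof (intro density_cong)
    show "AE x in Q. indicator Sd x / emeasure Q Sd = ennreal (indicator Sd x / W)"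
    proof (intro AE_I2)
      have e: "1 / ennreal W = ennreal (1/W)" using divide_ennreal[of 1 W] W_pos by simp
      show "indicator Sd x / emeasure Q Sd = ennreal (indicator Sd x / W)" for x
        using e by (auto simp: W_eq Q.emeasure_eq_measure indicator_def)
    qed
  qed auto
  have "(\<integral>v. g v \<partial>\<theta>) = (\<integral>u. g (fj u) \<partial>uniform_measure Q Sd)"
    unfolding theta_def' by (rule integral_distr) auto
  also have "\<dots> = (\<integral>u. (indicator Sd u / W) *\<^sub>R g (fj u) \<partial>Q)"
    unfolding um by (rule integral_density) (use W_pos in auto)
  also have "\<dots> = (\<integral>u. (1 / W) * (Dv d u * g (fj u)) \<partial>Q)"
    by (intro Bochner_Integration.integral_cong) (auto simp: Dv_def Sd_def indicator_def)
  also have "\<dots> = (1/W) * (\<integral>u. Dv d u * g (fj u) \<partial>Q)" by simp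
  finally show ?thesis using W_pos by simp
qed


definition Rxy :: "real \<times> real \<Rightarrow> real \<times> real \<Rightarrow> (real \<times> real) set" where "Rxy v1 v2 = bball (fst v1) (fst v2) \<times> bball (snd v1) (snd v2)"
definition Rx :: "real \<times> real \<Rightarrow> real \<times> real \<Rightarrow> (real \<times> real) set" where "Rx v1 v2 = bball (fst v1) (fst v2) \<times> (UNIV :: real set)"
definition Ry :: "real \<times> real \<Rightarrow> real \<times> real \<Rightarrow> (real \<times> real) set" where "Ry v1 v2 = (UNIV :: real set) \<times> bball (snd v1) (snd v2)"
definition "Phi v1 v2 = (measure \<theta> (Rxy v1 v2) - measure \<theta> (Rx v1 v2) * measure \<theta> (Ry v1 v2))\<^sup>2"
definition "Psi v1 = (\<integral>v2. Phi v1 v2 \<partial>\<theta>)"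

lemma bcov2_eq: "bcov2 \<theta> = (\<integral>v1. Psi v1 \<partial>\<theta>)"
  unfolding bcov2_def Psi_def Phi_def Rxy_def Rx_def Ry_def ..

lemma bball_borel[measurable]: "bball a b \<in> sets borel"
  unfolding bball_def by (rule borel_closed) simp

lemma mem_bball: "c \<in> bball a b \<longleftrightarrow> dist a c \<le> dist a b"
  unfolding bball_def by simp

lemma R_sets: "Rxy v1 v2 \<in> sets borel" "Rx v1 v2 \<in> sets borel" "Ry v1 v2 \<in> sets borel"
  unfolding Rxy_def Rx_def Ry_def borel_prod[symmetric] by (auto intro!: pair_measureI)

lemma theta_fst[measurable]: "fst \<in> borel_measurable \<theta>"
  unfolding measurable_cong_sets[OF sets_theta refl] by measurable
lemma theta_snd[measurable]: "snd \<in> borel_measurable \<theta>"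
  unfolding measurable_cong_sets[OF sets_theta refl] by measurable

lemma AB_eq: "AB u1 u2 = W * measure \<theta> (Rxy (fj u1) (fj u2))"
proof -
  have "AB u1 u2 = (\<integral>u. Dv d u * indicator (Rxy (fj u1) (fj u2)) (fj u) \<partial>Q)"
    unfolding AB_def by (intro Bochner_Integration.integral_cong) (auto simp: aa_def bb_def ind_def fj_def Rxy_def indicator_def)
  also have "\<dots> = W * (\<integral>v. indicator (Rxy (fj u1) (fj u2)) v \<partial>\<theta>)"
    by (rule T1) (intro borel_measurable_indicator R_sets)
  finally show ?thesis by (simp add: space_theta)
qed

lemma MA_eq: "MA u1 u2 = W * measure \<theta> (Rx (fj u1) (fj u2))"
proof -
  have "MA u1 u2 = (\<integral>u. Dv d u * indicator (Rx (fj u1) (fj u2)) (fj u) \<partial>Q)"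
    unfolding MA_def by (intro Bochner_Integration.integral_cong) (auto simp: aa_def ind_def fj_def Rx_def indicator_def)
  also have "\<dots> = W * (\<integral>v. indicator (Rx (fj u1) (fj u2)) v \<partial>\<theta>)"
    by (rule T1) (intro borel_measurable_indicator R_sets)
  finally show ?thesis by (simp add: space_theta)
qed

lemma MB_eq: "MB u1 u2 = W * measure \<theta> (Ry (fj u1) (fj u2))"
proof -
  have "MB u1 u2 = (\<integral>u. Dv d u * indicator (Ry (fj u1) (fj u2)) (fj u) \<partial>Q)"
    unfolding MB_def by (intro Bochner_Integration.integral_cong) (auto simp: bb_def ind_def fj_def Ry_def indicator_def)
  also have "\<dots> = W * (\<integral>v. indicator (Ry (fj u1) (fj u2)) v \<partial>\<theta>)"
    by (rule T1) (intro borel_measurable_indicator R_sets)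
  finally show ?thesis by (simp add: space_theta)
qed

lemma borel_fst_rr[measurable]: "(fst :: real \<times> real \<Rightarrow> real) \<in> borel_measurable borel"
  using measurable_fst[of "borel::real measure" "borel::real measure"] by (simp add: borel_prod)
lemma borel_snd_rr[measurable]: "(snd :: real \<times> real \<Rightarrow> real) \<in> borel_measurable borel"
  using measurable_snd[of "borel::real measure" "borel::real measure"] by (simp add: borel_prod)

lemma mPhi: "(\<lambda>w. Phi (f w) (g w)) \<in> borel_measurable N"
  if fm[measurable]: "f \<in> borel_measurable N" and gm[measurable]: "g \<in> borel_measurable N"
  for f g :: "'x \<Rightarrow> real \<times> real" and N
proof -
  interpret T: prob_space \<theta> by (rule prob_theta)
  have m1: "(\<lambda>w. measure \<theta> (Rxy (f w) (g w))) \<in> borel_measurable N"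
  proof (rule T.measurable_measure)
    show "{x \<in> space (N \<Otimes>\<^sub>M \<theta>). snd x \<in> Rxy (f (fst x)) (g (fst x))} \<in> sets (N \<Otimes>\<^sub>M \<theta>)"
      unfolding Rxy_def mem_Times_iff mem_bball by measurable
  qed (simp add: space_theta)
  have m2: "(\<lambda>w. measure \<theta> (Rx (f w) (g w))) \<in> borel_measurable N"
  proof (rule T.measurable_measure)
    show "{x \<in> space (N \<Otimes>\<^sub>M \<theta>). snd x \<in> Rx (f (fst x)) (g (fst x))} \<in> sets (N \<Otimes>\<^sub>M \<theta>)"
      unfolding Rx_def mem_Times_iff mem_bball by measurable
  qed (simp add: space_theta)
  have m3: "(\<lambda>w. measure \<theta> (Ry (f w) (g w))) \<in> borel_measurable N"
  proof (rule T.measurable_measure)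
    show "{x \<in> space (N \<Otimes>\<^sub>M \<theta>). snd x \<in> Ry (f (fst x)) (g (fst x))} \<in> sets (N \<Otimes>\<^sub>M \<theta>)"
      unfolding Ry_def mem_Times_iff mem_bball by measurable
  qed (simp add: space_theta)
  show ?thesis unfolding Phi_def using m1 m2 m3 by measurable
qed


lemma mPsi: "Psi \<in> borel_measurable borel"
proof -
  interpret T: prob_space \<theta> by (rule prob_theta)
  have "(\<lambda>w. Phi (fst w) (snd w)) \<in> borel_measurable (borel \<Otimes>\<^sub>M \<theta>)"
  proof (rule mPhi)
    show "fst \<in> borel_measurable (borel \<Otimes>\<^sub>M \<theta>)" by measurable
    have s1: "snd \<in> measurable (borel \<Otimes>\<^sub>M \<theta>) \<theta>" by measurable
    have "snd \<in> measurable (borel \<Otimes>\<^sub>M \<theta>) (borel \<Otimes>\<^sub>M borel)"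
      using s1 unfolding measurable_cong_sets[OF refl sets_theta] .
    thus "snd \<in> borel_measurable (borel \<Otimes>\<^sub>M \<theta>)" by (simp add: borel_prod)
  qed
  hence "case_prod Phi \<in> borel_measurable (borel \<Otimes>\<^sub>M \<theta>)" by (simp add: case_prod_beta')
  thus ?thesis unfolding Psi_def[abs_def] by (rule T.borel_measurable_lebesgue_integral)
qed

lemma pop: "(\<integral>u1. \<integral>u2. \<integral>u3. \<integral>u4. \<integral>u5. \<integral>u6. kernD d j u1 u2 u3 u4 u5 u6 \<partial>Q \<partial>Q \<partial>Q \<partial>Q \<partial>Q \<partial>Q) =
    W ^ 6 * bcov2 \<theta>"
proof -
  have sq: "(AB u1 u2 * W - MA u1 u2 * MB u1 u2)\<^sup>2 = W ^ 4 * Phi (fj u1) (fj u2)" for u1 u2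
    unfolding AB_eq MA_eq MB_eq Phi_def by (simp add: power2_eq_square eval_nat_numeral algebra_simps)
  have in2: "(\<integral>u2. Dv d u1 * Dv d u2 * (AB u1 u2 * W - MA u1 u2 * MB u1 u2)\<^sup>2 \<partial>Q) = W ^ 5 * (Dv d u1 * Psi (fj u1))" for u1
  proof -
    have "(\<integral>u2. Dv d u1 * Dv d u2 * (AB u1 u2 * W - MA u1 u2 * MB u1 u2)\<^sup>2 \<partial>Q) =
          (\<integral>u2. (Dv d u1 * W ^ 4) * (Dv d u2 * Phi (fj u1) (fj u2)) \<partial>Q)"
      unfolding sq by (simp add: algebra_simps)
    also have "\<dots> = (Dv d u1 * W ^ 4) * (\<integral>u2. Dv d u2 * Phi (fj u1) (fj u2) \<partial>Q)" by simp
    also have "(\<integral>u2. Dv d u2 * Phi (fj u1) (fj u2) \<partial>Q) = W * Psi (fj u1)"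
      unfolding Psi_def by (rule T1) (rule mPhi; measurable)
    finally have "(\<integral>u2. Dv d u1 * Dv d u2 * (AB u1 u2 * W - MA u1 u2 * MB u1 u2)\<^sup>2 \<partial>Q) = Dv d u1 * W ^ 4 * (W * Psi (fj u1))" .
    moreover have "Dv d u1 * W ^ 4 * (W * Psi (fj u1)) = W ^ 5 * (Dv d u1 * Psi (fj u1))" by (simp add: eval_nat_numeral algebra_simps)
    ultimately show ?thesis by simp
  qed
  have "(\<integral>u1. \<integral>u2. \<integral>u3. \<integral>u4. \<integral>u5. \<integral>u6. kernD d j u1 u2 u3 u4 u5 u6 \<partial>Q \<partial>Q \<partial>Q \<partial>Q \<partial>Q \<partial>Q) =
        (\<integral>u1. W ^ 5 * (Dv d u1 * Psi (fj u1)) \<partial>Q)"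
    unfolding chain in2 ..
  also have "\<dots> = W ^ 5 * (W * (\<integral>v. Psi v \<partial>\<theta>))"
    using T1[OF mPsi] by simp
  finally show ?thesis unfolding bcov2_eq by (simp add: eval_nat_numeral mult_ac)
qed

lemma Phi_bounds: "0 \<le> Phi v1 v2" "Phi v1 v2 \<le> 1"
proof -
  interpret T: prob_space \<theta> by (rule prob_theta)
  have "0 \<le> measure \<theta> A" "measure \<theta> A \<le> 1" for A by auto
  note mb = this
  have yz: "0 \<le> measure \<theta> (Rx v1 v2) * measure \<theta> (Ry v1 v2)" "measure \<theta> (Rx v1 v2) * measure \<theta> (Ry v1 v2) \<le> 1"
    using mb by (auto intro: mult_le_one)
  have "\<bar>measure \<theta> (Rxy v1 v2) - measure \<theta> (Rx v1 v2) * measure \<theta> (Ry v1 v2)\<bar> \<le> 1"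
    using yz mb(1)[of "Rxy v1 v2"] mb(2)[of "Rxy v1 v2"] unfolding abs_le_iff by linarith
  hence "\<bar>measure \<theta> (Rxy v1 v2) - measure \<theta> (Rx v1 v2) * measure \<theta> (Ry v1 v2)\<bar>\<^sup>2 \<le> 1"
    by (intro power_le_one) auto
  hence "(measure \<theta> (Rxy v1 v2) - measure \<theta> (Rx v1 v2) * measure \<theta> (Ry v1 v2))\<^sup>2 \<le> 1"
    by simp
  thus "Phi v1 v2 \<le> 1" unfolding Phi_def .
  show "0 \<le> Phi v1 v2" unfolding Phi_def by simp
qed

lemma bcov2_bounds: "0 \<le> bcov2 \<theta>" "bcov2 \<theta> \<le> 1"
proof -
  interpret T: prob_space \<theta> by (rule prob_theta)
  have "0 \<le> Psi v \<and> Psi v \<le> 1" for v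
  proof -
    have "\<bar>Psi v\<bar> \<le> 1" unfolding Psi_def
      by (rule abs_integral_le_bound[OF prob_theta]) (use Phi_bounds in auto)
    moreover have "0 \<le> Psi v" unfolding Psi_def by (rule integral_nonneg_AE) (use Phi_bounds in auto)
    ultimately show ?thesis by simp
  qed
  hence "\<bar>bcov2 \<theta>\<bar> \<le> 1" "0 \<le> bcov2 \<theta>" unfolding bcov2_eq
    by (intro abs_integral_le_bound[OF prob_theta], simp, intro integral_nonneg_AE, simp)
  thus "0 \<le> bcov2 \<theta>" "bcov2 \<theta> \<le> 1" by auto
qed

end

definition L6 :: "nat set \<Rightarrow> nat list set" where
  "L6 A = {xs. set xs \<subseteq> A \<and> length xs = 6}"

lemma sum_lists_Suc:
  assumes "finite A"
  shows "(\<Sum>xs\<in>{xs. set xs \<subseteq> A \<and> length xs = Suc m}. g xs) =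
         (\<Sum>a\<in>A. \<Sum>xs\<in>{xs. set xs \<subseteq> A \<and> length xs = m}. g (a # xs))"
proof -
  have eq: "{xs. set xs \<subseteq> A \<and> length xs = Suc m} = (\<lambda>(a,xs). a # xs) ` (A \<times> {xs. set xs \<subseteq> A \<and> length xs = m})"
    by (auto simp: length_Suc_conv image_iff)
  have inj: "inj_on (\<lambda>(a,xs). a # xs) (A \<times> {xs. set xs \<subseteq> A \<and> length xs = m})"
    by (auto simp: inj_on_def)
  show ?thesis unfolding eq sum.reindex[OF inj]
    by (simp add: sum.cartesian_product case_prod_beta')
qed

lemma sum_lists_0: "(\<Sum>xs\<in>{xs. set xs \<subseteq> A \<and> length xs = 0}. g xs) = g []"
proof -
  have "{xs. set xs \<subseteq> A \<and> length xs = 0} = {[]}" by auto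
  thus ?thesis by simp
qed

lemma sum_lists_0': "(\<Sum>xs | xs = [] \<and> set xs \<subseteq> A. g xs) = g []"
proof -
  have "{xs. xs = [] \<and> set xs \<subseteq> A} = {[]}" by auto
  thus ?thesis by simp
qed

lemma nest6:
  assumes "finite A"
  shows "(\<Sum>i\<in>A. \<Sum>j\<in>A. \<Sum>k\<in>A. \<Sum>l\<in>A. \<Sum>s\<in>A. \<Sum>t\<in>A. f i j k l s t) =
         (\<Sum>xs\<in>L6 A. f (xs!0) (xs!1) (xs!2) (xs!3) (xs!4) (xs!5))"
  unfolding L6_def using assms
  by (simp add: numeral_eq_Suc sum_lists_Suc sum_lists_0 sum_lists_0')

lemma card_L6: "finite A \<Longrightarrow> card (L6 A) = card A ^ 6"
  unfolding L6_def by (rule card_lists_length_eq)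

lemma finite_L6: "finite A \<Longrightarrow> finite (L6 A)"
  unfolding L6_def by (rule finite_lists_length_eq)

lemma L6_nth: "xs \<in> L6 A \<Longrightarrow> k < 6 \<Longrightarrow> xs ! k \<in> A"
  unfolding L6_def by auto

lemma L6_expand: "xs \<in> L6 A \<Longrightarrow> xs = [xs!0, xs!1, xs!2, xs!3, xs!4, xs!5]"
  unfolding L6_def
  by (auto simp: numeral_eq_Suc length_Suc_conv)

definition kD :: "bool \<Rightarrow> nat \<Rightarrow> (nat \<Rightarrow> obs) \<Rightarrow> nat list \<Rightarrow> real" where
  "kD d j S xs = kernD d j (S (xs!0)) (S (xs!1)) (S (xs!2)) (S (xs!3)) (S (xs!4)) (S (xs!5))"

definition Ustat :: "bool \<Rightarrow> nat \<Rightarrow> nat \<Rightarrow> (nat \<Rightarrow> obs) \<Rightarrow> real" where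
  "Ustat d j n S = (\<Sum>xs\<in>L6 {..<n}. kD d j S xs) / real n ^ 6"

definition Nfrac :: "nat \<Rightarrow> (nat \<Rightarrow> obs) \<Rightarrow> real" where
  "Nfrac n S = (\<Sum>i<n. Dv True (S i)) / real n"

lemma bxi_kern:
  "bxi (\<lambda>i. fst (S i) j) i1 i2 i3 i4 i5 i6 * bxi (\<lambda>i. snd (snd (S i))) i1 i2 i3 i4 i5 i6 =
   kern j (S i1) (S i2) (S i3) (S i4) (S i5) (S i6)"
  unfolding kern_def bxi_def bdelta_def by (simp add: numeral_eq_Suc)

lemma grp_sum:
  assumes "finite I" and "Isub = {i\<in>I. fst (snd (S i)) = d}"
  shows "(\<Sum>xs\<in>L6 Isub. kern j (S (xs!0)) (S (xs!1)) (S (xs!2)) (S (xs!3)) (S (xs!4)) (S (xs!5)))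
       = (\<Sum>xs\<in>L6 I. kD d j S xs)"
proof -
  have fin: "finite (L6 I)" by (rule finite_L6[OF assms(1)])
  have sub: "L6 Isub = {xs \<in> L6 I. \<forall>k<6. fst (snd (S (xs!k))) = d}"
    unfolding L6_def assms(2) by (auto simp: in_set_conv_nth subset_iff) (metis (full_types))+
  have "(\<Sum>xs\<in>L6 I. kD d j S xs) = (\<Sum>xs\<in>L6 I. if (\<forall>k<6. fst (snd (S (xs!k))) = d)
        then kern j (S (xs!0)) (S (xs!1)) (S (xs!2)) (S (xs!3)) (S (xs!4)) (S (xs!5)) else 0)"
  proof (intro sum.cong refl)
    fix xs assume "xs \<in> L6 I"
    show "kD d j S xs = (if (\<forall>k<6. fst (snd (S (xs!k))) = d)
        then kern j (S (xs!0)) (S (xs!1)) (S (xs!2)) (S (xs!3)) (S (xs!4)) (S (xs!5)) else 0)"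
    proof (cases "\<forall>k<6. fst (snd (S (xs!k))) = d")
      case True
      then show ?thesis unfolding kD_def kernD_def Dv_def by (simp add: numeral_eq_Suc)
    next
      case False
      then obtain k where k: "k < 6" "fst (snd (S (xs!k))) \<noteq> d" by auto
      hence "k = 0 \<or> k = 1 \<or> k = 2 \<or> k = 3 \<or> k = 4 \<or> k = 5" by auto
      with k False show ?thesis unfolding kD_def kernD_def Dv_def by auto
    qed
  qed
  also have "\<dots> = (\<Sum>xs\<in>{xs \<in> L6 I. \<forall>k<6. fst (snd (S (xs!k))) = d}.
        kern j (S (xs!0)) (S (xs!1)) (S (xs!2)) (S (xs!3)) (S (xs!4)) (S (xs!5)))"
    by (rule sum.inter_filter[OF fin, symmetric])
  finally show ?thesis unfolding sub by simp
qed

lemma grp_eq: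
  assumes "finite I" "Isub = {i\<in>I. fst (snd (S i)) = d}"
  shows "bcovn_grp (\<lambda>i. fst (S i) j) (\<lambda>i. snd (snd (S i))) Isub = (\<Sum>xs\<in>L6 I. kD d j S xs) / real (card Isub) ^ 6"
proof -
  have fin: "finite Isub" using assms by simp
  show ?thesis unfolding bcovn_grp_def bxi_kern nest6[OF fin] grp_sum[OF assms] ..
qed

lemma card_sub_eq:
  assumes "finite I"
  shows "real (card {i\<in>I. fst (snd (S i)) = d}) = (\<Sum>i\<in>I. Dv d (S i))"
proof -
  have "real (card {i\<in>I. fst (snd (S i)) = d}) = (\<Sum>i\<in>{i\<in>I. fst (snd (S i)) = d}. 1)" by simp
  also have "\<dots> = (\<Sum>i\<in>I. if fst (snd (S i)) = d then 1 else 0)"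
    by (rule sum.inter_filter[OF assms])
  finally show ?thesis unfolding Dv_def by simp
qed

lemma alg_w: "n > 0 \<Longrightarrow> w * (T / (n * w) ^ 6) = (T / n ^ 6) / w ^ 5" for n w T :: real
  by (cases "w = 0") (simp_all add: field_simps power_mult_distrib eval_nat_numeral)

lemma cbcov2n_eq:
  assumes n: "n > 0"
  shows "cbcov2n n S j = Ustat True j n S / Nfrac n S ^ 5 + Ustat False j n S / (1 - Nfrac n S) ^ 5"
proof -
  let ?I1 = "{i\<in>{..<n}. fst (snd (S i))}" and ?I0 = "{i\<in>{..<n}. \<not> fst (snd (S i))}"
  have e1: "?I1 = {i\<in>{..<n}. fst (snd (S i)) = True}" by simp
  have e0: "?I0 = {i\<in>{..<n}. fst (snd (S i)) = False}" by simp
  have c1: "real (card ?I1) = real n * Nfrac n S"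
    unfolding e1 card_sub_eq[OF finite_lessThan] Nfrac_def using n by simp
  have dv: "Dv False u = 1 - Dv True u" for u by (simp add: Dv_def)
  have c0: "real (card ?I0) = real n * (1 - Nfrac n S)"
    unfolding e0 card_sub_eq[OF finite_lessThan] Nfrac_def dv using n
    by (simp add: sum_subtractf right_diff_distrib)
  have w: "real (card ?I1) / real n = Nfrac n S" using c1 n by simp
  have "cbcov2n n S j = Nfrac n S * ((\<Sum>xs\<in>L6 {..<n}. kD True j S xs) / (real n * Nfrac n S) ^ 6)
      + (1 - Nfrac n S) * ((\<Sum>xs\<in>L6 {..<n}. kD False j S xs) / (real n * (1 - Nfrac n S)) ^ 6)"
    unfolding cbcov2n_def Let_def w grp_eq[OF finite_lessThan e1] grp_eq[OF finite_lessThan e0]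
    unfolding c1 c0 ..
  also have "\<dots> = Ustat True j n S / Nfrac n S ^ 5 + Ustat False j n S / (1 - Nfrac n S) ^ 5"
    unfolding Ustat_def using n
    by (simp only: alg_w[of "real n" "Nfrac n S"] alg_w[of "real n" "1 - Nfrac n S"] of_nat_0_less_iff)
  finally show ?thesis .
qed

lemma pow6_diff: "real n ^ 6 - real (n - 1) ^ 6 \<le> 6 * real n ^ 5"
proof (cases n)
  case 0 then show ?thesis by simp
next
  case (Suc m)
  define x where "x = real m"
  have x: "x \<ge> 0" by (simp add: x_def)
  have "real n ^ 6 - real (n - 1) ^ 6 = 6*x^5+15*x^4+20*x^3+15*x^2+6*x+1"
    unfolding Suc x_def[symmetric] by (simp add: x_def eval_nat_numeral algebra_simps)
  moreover have "6 * real n ^ 5 = 6*x^5+30*x^4+60*x^3+60*x^2+30*x+6"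
    unfolding Suc by (simp add: x_def eval_nat_numeral algebra_simps)
  moreover have "x^2 \<ge> 0" "x^3 \<ge> 0" "x^4 \<ge> 0" "x^5 \<ge> 0" using x by auto
  ultimately show ?thesis using x by linarith
qed

lemma poly6a: "(x+6)^6 - (x+1)*(x+2)*(x+3)*(x+4)*(x+5)*(x+6) = 15*x^5 + 365*x^4 + 3585*x^3 + 17816*x^2 + 44892*x + (45936::real)"
  by (simp add: eval_nat_numeral algebra_simps)
lemma poly6b: "15 * (x+6) ^ 5 = 15*x^5 + 450*x^4 + 5400*x^3 + 32400*x^2 + 97200*x + (116640::real)"
  by (simp add: eval_nat_numeral algebra_simps)

lemma distinct_count:
  "real n ^ 6 - real (\<Prod>{n - 6 + 1..n}) \<le> 15 * real n ^ 5"
proof (cases "n \<ge> 6")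
  case True
  then obtain m where m: "n = m + 6" by (metis add.commute le_Suc_ex)
  define x where "x = real m"
  have x: "x \<ge> 0" by (simp add: x_def)
  have set: "{n - 6 + 1..n} = {m+1, m+2, m+3, m+4, m+5, m+6}" unfolding m by auto
  have p: "real (\<Prod>{n - 6 + 1..n}) = (x+1)*(x+2)*(x+3)*(x+4)*(x+5)*(x+6)"
    unfolding set by (simp add: x_def algebra_simps)
  have nx: "real n = x + 6" by (simp add: m x_def)
  have "real n ^ 6 - real (\<Prod>{n - 6 + 1..n}) = 15*x^5 + 365*x^4 + 3585*x^3 + 17816*x^2 + 44892*x + 45936"
    unfolding p nx by (rule poly6a)
  moreover have "15 * real n ^ 5 = 15*x^5 + 450*x^4 + 5400*x^3 + 32400*x^2 + 97200*x + 116640"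
    unfolding nx by (rule poly6b)
  moreover have "x^2 \<ge> 0" "x^3 \<ge> 0" "x^4 \<ge> 0" "x^5 \<ge> 0" using x by auto
  ultimately show ?thesis using x by linarith
next
  case False
  hence "real n \<le> 15" by simp
  hence "real n ^ 6 \<le> 15 * real n ^ 5"
  proof -
    have "real n ^ 6 = real n ^ 5 * real n" by (simp add: eval_nat_numeral)
    also have "\<dots> \<le> real n ^ 5 * 15" by (intro mult_left_mono) (use \<open>real n \<le> 15\<close> in auto)
    finally show ?thesis by simp
  qed
  thus ?thesis by (smt (verit) of_nat_0_le_iff)
qed

context pm
begin

lemma kernD_meas: "(\<lambda>w. kernD d j (fst w) (fst (snd w)) (fst (snd (snd w))) (fst (snd (snd (snd w))))
                 (fst (snd (snd (snd (snd w))))) (snd (snd (snd (snd (snd w))))))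
               \<in> borel_measurable (Q \<Otimes>\<^sub>M (Q \<Otimes>\<^sub>M (Q \<Otimes>\<^sub>M (Q \<Otimes>\<^sub>M (Q \<Otimes>\<^sub>M Q)))))"
  unfolding kernD_def kern_eq ind_eq by measurable

lemmas kernD_comp[measurable (raw)] = meas6_compose[OF kernD_meas]

lemma kD_meas: "xs \<in> L6 {..<n} \<Longrightarrow> (\<lambda>S. kD d j S xs) \<in> borel_measurable (PiM {..<n} (\<lambda>_. Q))"
  unfolding kD_def using L6_nth[of xs "{..<n}"] by measurable

lemma Ustat_meas: "Ustat d j n \<in> borel_measurable (PiM {..<n} (\<lambda>_. Q))"
  unfolding Ustat_def[abs_def] by (intro borel_measurable_divide borel_measurable_sum kD_meas) auto

lemma Nfrac_meas: "Nfrac n \<in> borel_measurable (PiM {..<n} (\<lambda>_. Q))"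
  unfolding Nfrac_def[abs_def] Dv_def by measurable

lemma abs_kD: "\<bar>kD d j S xs\<bar> \<le> 1" unfolding kD_def by (rule abs_kernD)

lemma Ustat_bound: "\<bar>Ustat d j n S\<bar> \<le> 1"
proof (cases "n = 0")
  case True thus ?thesis by (simp add: Ustat_def)
next
  case False
  have "\<bar>\<Sum>xs\<in>L6 {..<n}. kD d j S xs\<bar> \<le> (\<Sum>xs\<in>L6 {..<n}. 1)"
    by (rule order_trans[OF sum_abs sum_mono]) (rule abs_kD)
  also have "\<dots> = real n ^ 6" by (simp add: card_L6)
  finally have le: "\<bar>\<Sum>xs\<in>L6 {..<n}. kD d j S xs\<bar> \<le> real n ^ 6" .
  have pos: "real n ^ 6 > 0" using False by simp
  have "\<bar>Ustat d j n S\<bar> = \<bar>\<Sum>xs\<in>L6 {..<n}. kD d j S xs\<bar> / real n ^ 6"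
    unfolding Ustat_def abs_divide using pos by simp
  also have "\<dots> \<le> real n ^ 6 / real n ^ 6" by (rule divide_right_mono[OF le]) (use pos in simp)
  also have "\<dots> = 1" using pos by simp
  finally show ?thesis .
qed

lemma Nfrac_bound: "\<bar>Nfrac n S\<bar> \<le> 1"
proof (cases "n = 0")
  case True thus ?thesis by (simp add: Nfrac_def)
next
  case False
  have "(\<Sum>i<n. Dv True (S i)) \<le> (\<Sum>i<n. 1)" by (intro sum_mono) (simp add: Dv_def)
  moreover have "0 \<le> (\<Sum>i<n. Dv True (S i))" by (intro sum_nonneg) (simp add: Dv_def)
  ultimately have le: "\<bar>\<Sum>i<n. Dv True (S i)\<bar> \<le> real n" by simp
  have pos: "real n > 0" using False by simp
  have "\<bar>Nfrac n S\<bar> = \<bar>\<Sum>i<n. Dv True (S i)\<bar> / real n"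
    unfolding Nfrac_def abs_divide using pos by simp
  also have "\<dots> \<le> real n / real n" by (rule divide_right_mono[OF le]) (use pos in simp)
  also have "\<dots> = 1" using pos by simp
  finally show ?thesis .
qed

lemma Nfrac_diff:
  assumes m: "m < n"
  shows "\<bar>Nfrac n S - Nfrac n (S(m:=y))\<bar> \<le> 1 / real n"
proof -
  have "(\<Sum>i<n. Dv True (S i)) - (\<Sum>i<n. Dv True ((S(m:=y)) i)) = (\<Sum>i<n. Dv True (S i) - Dv True ((S(m:=y)) i))"
    by (simp add: sum_subtractf)
  also have "\<dots> = (\<Sum>i\<in>{m}. Dv True (S i) - Dv True ((S(m:=y)) i))"
    by (rule sum.mono_neutral_right) (use m in auto)
  finally have "\<bar>(\<Sum>i<n. Dv True (S i)) - (\<Sum>i<n. Dv True ((S(m:=y)) i))\<bar> \<le> 1"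
    by (simp add: Dv_def)
  note le = this
  have pos: "real n > 0" using m by simp
  have "\<bar>Nfrac n S - Nfrac n (S(m:=y))\<bar> = \<bar>(\<Sum>i<n. Dv True (S i)) - (\<Sum>i<n. Dv True ((S(m:=y)) i))\<bar> / real n"
    unfolding Nfrac_def diff_divide_distrib[symmetric] abs_divide using pos by simp
  also have "\<dots> \<le> 1 / real n" by (rule divide_right_mono[OF le]) (use pos in simp)
  finally show ?thesis .
qed

lemma Ustat_diff:
  assumes m: "m < n"
  shows "\<bar>Ustat d j n S - Ustat d j n (S(m:=y))\<bar> \<le> 12 / real n"
proof -
  let ?I = "{..<n}" and ?S' = "S(m:=y)"
  have fin: "finite (L6 ?I)" by (rule finite_L6) simp
  have sub: "L6 (?I - {m}) \<subseteq> L6 ?I" unfolding L6_def by auto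
  have eqt: "kD d j S xs - kD d j ?S' xs = 0" if "xs \<in> L6 (?I - {m})" for xs
  proof -
    have "xs ! k \<noteq> m" if "k < 6" for k using L6_nth[OF \<open>xs \<in> L6 (?I - {m})\<close> that] by auto
    thus ?thesis unfolding kD_def by simp
  qed
  have "(\<Sum>xs\<in>L6 ?I. kD d j S xs) - (\<Sum>xs\<in>L6 ?I. kD d j ?S' xs) = (\<Sum>xs\<in>L6 ?I. kD d j S xs - kD d j ?S' xs)"
    by (simp add: sum_subtractf)
  also have "\<dots> = (\<Sum>xs\<in>L6 ?I - L6 (?I - {m}). kD d j S xs - kD d j ?S' xs)"
    by (rule sum.mono_neutral_right[OF fin]) (use eqt in auto)
  finally have eq: "(\<Sum>xs\<in>L6 ?I. kD d j S xs) - (\<Sum>xs\<in>L6 ?I. kD d j ?S' xs) = (\<Sum>xs\<in>L6 ?I - L6 (?I - {m}). kD d j S xs - kD d j ?S' xs)" .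
  have "\<bar>\<Sum>xs\<in>L6 ?I - L6 (?I - {m}). kD d j S xs - kD d j ?S' xs\<bar> \<le> (\<Sum>xs\<in>L6 ?I - L6 (?I - {m}). 2)"
  proof (rule order_trans[OF sum_abs sum_mono])
    fix xs show "\<bar>kD d j S xs - kD d j ?S' xs\<bar> \<le> 2" using abs_kD[of S xs] abs_kD[of ?S' xs] by linarith
  qed
  also have "\<dots> = 2 * (real n ^ 6 - real (n - 1) ^ 6)"
  proof -
    have "card (L6 ?I - L6 (?I - {m})) = n ^ 6 - (n - 1) ^ 6"
      using m by (simp add: card_Diff_subset[OF finite_L6 sub] card_L6)
    moreover have "(n - 1) ^ 6 \<le> n ^ 6" by (simp add: power_mono)
    ultimately show ?thesis by (simp add: of_nat_diff)
  qed
  also have "\<dots> \<le> 2 * (6 * real n ^ 5)" using pow6_diff[of n] by simp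
  finally have b: "\<bar>(\<Sum>xs\<in>L6 ?I. kD d j S xs) - (\<Sum>xs\<in>L6 ?I. kD d j ?S' xs)\<bar> \<le> 12 * real n ^ 5"
    unfolding eq by simp
  have n: "real n > 0" using m by simp
  have "\<bar>Ustat d j n S - Ustat d j n ?S'\<bar> = \<bar>(\<Sum>xs\<in>L6 ?I. kD d j S xs) - (\<Sum>xs\<in>L6 ?I. kD d j ?S' xs)\<bar> / real n ^ 6"
    unfolding Ustat_def diff_divide_distrib[symmetric] abs_divide using n by simp
  also have "\<dots> \<le> 12 * real n ^ 5 / real n ^ 6" using b n by (intro divide_right_mono) auto
  also have "\<dots> = 12 / real n" using n by (simp add: eval_nat_numeral field_simps)
  finally show ?thesis .
qed

lemma mDv_any[measurable]: "Dv b \<in> borel_measurable Q"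
  unfolding Dv_def by measurable

lemma abs_Dv: "\<bar>Dv b u\<bar> \<le> 1" by (simp add: Dv_def)

lemma E_Dv_comp:
  assumes i: "i < n"
  shows "(\<integral>S. Dv True (S i) \<partial>PiM {..<n} (\<lambda>_. Q)) = measure Q {u \<in> space Q. fst (snd u)}"
proof -
  have "(\<integral>S. Dv True (S i) \<partial>PiM {..<n} (\<lambda>_. Q)) = (\<integral>u. Dv True u \<partial>distr (PiM {..<n} (\<lambda>_. Q)) Q (\<lambda>S. S i))"
  proof (rule integral_distr[symmetric])
    have i': "i \<in> {..<n}" using i by simp
    show "(\<lambda>S. S i) \<in> measurable (PiM {..<n} (\<lambda>_. Q)) Q" using i' by measurable
  qed (rule mDv_any)
  also have "distr (PiM {..<n} (\<lambda>_. Q)) Q (\<lambda>S. S i) = Q"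
    by (rule distr_PiM_component) (use i prob in auto)
  also have "(\<integral>u. Dv True u \<partial>Q) = (\<integral>u. indicator {u \<in> space Q. fst (snd u)} u \<partial>Q)"
    by (intro Bochner_Integration.integral_cong) (auto simp: Dv_def indicator_def)
  finally show ?thesis by simp
qed

lemma E_Nfrac:
  assumes n: "n > 0"
  shows "(\<integral>S. Nfrac n S \<partial>PiM {..<n} (\<lambda>_. Q)) = measure Q {u \<in> space Q. fst (snd u)}"
proof -
  let ?P = "PiM {..<n} (\<lambda>_. Q)"
  interpret P: prob_space ?P by (intro prob_space_PiM prob)
  have int: "integrable ?P (\<lambda>S. Dv True (S i))" if "i < n" for i
  proof (rule integrable_bounded_prob[OF P.prob_space_axioms, where B=1])
    have i': "i \<in> {..<n}" using that by simp
    show "(\<lambda>S. Dv True (S i)) \<in> borel_measurable ?P" using i' by measurable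
  qed (rule abs_Dv)
  have "(\<integral>S. Nfrac n S \<partial>?P) = (\<Sum>i<n. (\<integral>S. Dv True (S i) \<partial>?P)) / real n"
    unfolding Nfrac_def by (simp add: Bochner_Integration.integral_sum int)
  also have "\<dots> = (\<Sum>i<n. measure Q {u \<in> space Q. fst (snd u)}) / real n"
    by (simp add: E_Dv_comp)
  finally show ?thesis using n by simp
qed

end

lemma small_pow: "real n \<le> 15 \<Longrightarrow> real n ^ 6 \<le> 15 * real n ^ 5"
proof -
  assume a: "real n \<le> 15"
  have "real n ^ 6 = real n ^ 5 * real n" by (simp add: eval_nat_numeral)
  also have "\<dots> \<le> real n ^ 5 * 15" by (intro mult_left_mono) (use a in auto)
  finally show ?thesis by simp
qed

lemma card_dist_bound:
  "real n ^ 6 - real (card {xs. length xs = 6 \<and> distinct xs \<and> set xs \<subseteq> {..<n}}) \<le> 15 * real n ^ 5"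
proof (cases "6 \<le> n")
  case True
  have "card {xs. length xs = 6 \<and> distinct xs \<and> set xs \<subseteq> {..<n}} = \<Prod>{n - 6 + 1..n}"
    using card_lists_distinct_length_eq[of "{..<n}" 6] True by simp
  thus ?thesis using distinct_count[of n] by simp
next
  case False
  thus ?thesis using small_pow[of n] by simp
qed

context pmW
begin

lemma W_le1: "W \<le> 1" unfolding W_eq by simp
lemma W_nonneg: "W \<ge> 0" using W_pos by simp

lemma E_kD_distinct:
  assumes xs: "xs \<in> L6 {..<n}" and dx: "distinct xs"
  shows "(\<integral>S. kD d j S xs \<partial>PiM {..<n} (\<lambda>_. Q)) = W ^ 6 * bcov2 \<theta>"
proof -
  have e: "xs = [xs!0, xs!1, xs!2, xs!3, xs!4, xs!5]" by (rule L6_expand[OF xs])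
  have "(\<integral>S. kD d j S xs \<partial>PiM {..<n} (\<lambda>_. Q)) =
     (\<integral>u1. \<integral>u2. \<integral>u3. \<integral>u4. \<integral>u5. \<integral>u6. kernD d j u1 u2 u3 u4 u5 u6 \<partial>Q \<partial>Q \<partial>Q \<partial>Q \<partial>Q \<partial>Q)"
    unfolding kD_def
  proof (rule PiM_E6[OF prob finite_lessThan _ _ kernD_meas abs_kernD])
    show "distinct [xs!0, xs!1, xs!2, xs!3, xs!4, xs!5]" using dx e by metis
    show "{xs!0, xs!1, xs!2, xs!3, xs!4, xs!5} \<subseteq> {..<n}" using L6_nth[OF xs] by auto
  qed
  thus ?thesis using pop by simp
qed

lemma E_Ustat:
  assumes n: "n > 0"
  shows "\<bar>(\<integral>S. Ustat d j n S \<partial>PiM {..<n} (\<lambda>_. Q)) - W ^ 6 * bcov2 \<theta>\<bar> \<le> 30 / real n"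
proof -
  let ?P = "PiM {..<n} (\<lambda>_. Q)" and ?L = "L6 {..<n}"
  let ?D = "{xs. length xs = 6 \<and> distinct xs \<and> set xs \<subseteq> {..<n}}"
  define c where "c = W ^ 6 * bcov2 \<theta>"
  interpret P: prob_space ?P by (intro prob_space_PiM prob)
  have fin: "finite ?L" by (rule finite_L6) simp
  have int: "integrable ?P (\<lambda>S. kD d j S xs)" if "xs \<in> ?L" for xs
    by (rule integrable_bounded_prob[OF P.prob_space_axioms kD_meas[OF that], where B=1]) (rule abs_kD)
  have Dsub: "?D \<subseteq> ?L" unfolding L6_def by auto
  have c1: "\<bar>c\<bar> \<le> 1"
  proof -
    have "W ^ 6 \<le> 1" using W_le1 W_nonneg by (simp add: power_le_one)
    moreover have "W ^ 6 \<ge> 0" using W_nonneg by simp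
    ultimately show ?thesis unfolding c_def using bcov2_bounds
      by (simp add: abs_mult) (metis mult_le_one abs_of_nonneg)
  qed
  have E: "(\<integral>S. Ustat d j n S \<partial>?P) = (\<Sum>xs\<in>?L. (\<integral>S. kD d j S xs \<partial>?P)) / real n ^ 6"
    unfolding Ustat_def by (simp add: Bochner_Integration.integral_sum int)
  have cL: "real (card ?L) = real n ^ 6" by (simp add: card_L6)
  have "(\<integral>S. Ustat d j n S \<partial>?P) - c = (\<Sum>xs\<in>?L. (\<integral>S. kD d j S xs \<partial>?P) - c) / real n ^ 6"
    unfolding E using n cL by (simp add: sum_subtractf diff_divide_distrib)
  also have "(\<Sum>xs\<in>?L. (\<integral>S. kD d j S xs \<partial>?P) - c) = (\<Sum>xs\<in>?L - ?D. (\<integral>S. kD d j S xs \<partial>?P) - c)"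
  proof (rule sum.mono_neutral_right[OF fin])
    show "\<forall>xs\<in>?L - (?L - ?D). (\<integral>S. kD d j S xs \<partial>?P) - c = 0"
      using E_kD_distinct c_def by auto
  qed auto
  finally have eq: "(\<integral>S. Ustat d j n S \<partial>?P) - c = (\<Sum>xs\<in>?L - ?D. (\<integral>S. kD d j S xs \<partial>?P) - c) / real n ^ 6" .
  have "\<bar>\<Sum>xs\<in>?L - ?D. (\<integral>S. kD d j S xs \<partial>?P) - c\<bar> \<le> (\<Sum>xs\<in>?L - ?D. 2)"
  proof (rule order_trans[OF sum_abs sum_mono])
    fix xs
    have "\<bar>\<integral>S. kD d j S xs \<partial>?P\<bar> \<le> 1" by (rule abs_integral_le_bound[OF P.prob_space_axioms abs_kD])
    thus "\<bar>(\<integral>S. kD d j S xs \<partial>?P) - c\<bar> \<le> 2" using c1 by linarith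
  qed
  also have "\<dots> = 2 * (real n ^ 6 - real (card ?D))"
    using card_Diff_subset[OF finite_subset[OF Dsub fin] Dsub] card_mono[OF fin Dsub] cL
    by (simp add: of_nat_diff)
  also have "\<dots> \<le> 2 * (15 * real n ^ 5)" using card_dist_bound[of n] by simp
  finally have b: "\<bar>\<Sum>xs\<in>?L - ?D. (\<integral>S. kD d j S xs \<partial>?P) - c\<bar> \<le> 30 * real n ^ 5" by simp
  have pos: "real n ^ 6 > 0" using n by simp
  have "\<bar>(\<integral>S. Ustat d j n S \<partial>?P) - c\<bar> = \<bar>\<Sum>xs\<in>?L - ?D. (\<integral>S. kD d j S xs \<partial>?P) - c\<bar> / real n ^ 6"
    unfolding eq abs_divide using pos by simp
  also have "\<dots> \<le> 30 * real n ^ 5 / real n ^ 6" by (rule divide_right_mono[OF b]) (use pos in simp)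
  also have "\<dots> = 30 / real n" using n by (simp add: eval_nat_numeral field_simps)
  finally show ?thesis unfolding c_def .
qed

end

lemma pow5_lip:
  fixes a b c :: real
  assumes "0 \<le> a" "a \<le> c" "0 \<le> b" "b \<le> c"
  shows "\<bar>a ^ 5 - b ^ 5\<bar> \<le> 5 * c ^ 4 * \<bar>a - b\<bar>"
proof -
  have f: "a ^ 5 - b ^ 5 = (a - b) * (a^4 + a^3*b + a^2*b^2 + a*b^3 + b^4)"
    by (simp add: eval_nat_numeral algebra_simps)
  have t: "a^4 \<le> c^4" "a^3*b \<le> c^4" "a^2*b^2 \<le> c^4" "a*b^3 \<le> c^4" "b^4 \<le> c^4"
  proof -
    have p: "a^k \<le> c^k" "b^k \<le> c^k" for k using assms by (auto intro: power_mono)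
    show "a^4 \<le> c^4" "b^4 \<le> c^4" using p by auto
    have "a^3*b \<le> c^3*c" using p[of 3] assms by (intro mult_mono) auto
    thus "a^3*b \<le> c^4" by (simp add: eval_nat_numeral)
    have "a^2*b^2 \<le> c^2*c^2" using p[of 2] assms by (intro mult_mono) auto
    thus "a^2*b^2 \<le> c^4" by (simp add: eval_nat_numeral)
    have "a*b^3 \<le> c*c^3" using p[of 3] assms by (intro mult_mono) auto
    thus "a*b^3 \<le> c^4" by (simp add: eval_nat_numeral)
  qed
  have nn: "0 \<le> a^4 + a^3*b + a^2*b^2 + a*b^3 + b^4" using assms by simp
  have "\<bar>a ^ 5 - b ^ 5\<bar> = \<bar>a - b\<bar> * (a^4 + a^3*b + a^2*b^2 + a*b^3 + b^4)"
    unfolding f abs_mult using nn by simp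
  also have "\<dots> \<le> \<bar>a - b\<bar> * (5 * c^4)" using t by (intro mult_left_mono) auto
  finally show ?thesis by (simp add: algebra_simps)
qed

lemma ratio_bound:
  fixes w r N U \<eta> :: real
  assumes w: "0 < w" "w \<le> 1" and r: "0 \<le> r" "r \<le> 1"
    and N: "\<bar>N - w\<bar> \<le> \<eta>" and U: "\<bar>U - w ^ 6 * r\<bar> \<le> \<eta>" and eta: "\<eta> \<le> w / 2"
  shows "\<bar>U / N ^ 5 - w * r\<bar> \<le> (32 / w ^ 5 + 2560) * \<eta>"
proof -
  have eta0: "\<eta> \<ge> 0" using N by linarith
  have N1: "N \<ge> w / 2" using N eta by (simp add: abs_le_iff)
  have N2: "N \<le> 2 * w" using N eta w by (simp add: abs_le_iff)
  have Npos: "N > 0" using N1 w by simp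
  have N5: "N ^ 5 \<ge> (w / 2) ^ 5" using N1 w by (intro power_mono) auto
  have w5: "(w / 2) ^ 5 > 0" using w by simp
  have split: "U / N ^ 5 - w * r = (U - w ^ 6 * r) / N ^ 5 + r * w * (w ^ 5 - N ^ 5) / N ^ 5"
    using Npos by (simp add: field_simps eval_nat_numeral)
  have b1: "\<bar>(U - w ^ 6 * r) / N ^ 5\<bar> \<le> 32 / w ^ 5 * \<eta>"
  proof -
    have "\<bar>(U - w ^ 6 * r) / N ^ 5\<bar> = \<bar>U - w ^ 6 * r\<bar> / N ^ 5" using Npos by (simp add: abs_divide)
    also have "\<dots> \<le> \<eta> / N ^ 5" using U Npos by (intro divide_right_mono) auto
    also have "\<dots> \<le> \<eta> / (w / 2) ^ 5" using N5 w5 eta0 Npos by (intro divide_left_mono) auto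
    also have "\<dots> = 32 / w ^ 5 * \<eta>" by (simp add: field_simps eval_nat_numeral)
    finally show ?thesis .
  qed
  have b2: "\<bar>r * w * (w ^ 5 - N ^ 5) / N ^ 5\<bar> \<le> 2560 * \<eta>"
  proof -
    have lip: "\<bar>w ^ 5 - N ^ 5\<bar> \<le> 5 * (2 * w) ^ 4 * \<eta>"
    proof -
      have "\<bar>w ^ 5 - N ^ 5\<bar> \<le> 5 * (2 * w) ^ 4 * \<bar>w - N\<bar>"
        using w Npos N2 by (intro pow5_lip) auto
      also have "\<dots> \<le> 5 * (2 * w) ^ 4 * \<eta>" using N w by (intro mult_left_mono) (auto simp: abs_minus_commute)
      finally show ?thesis .
    qed
    have rw: "\<bar>r * w\<bar> \<le> w" using r w by (simp add: abs_mult mult_le_one)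
    have "\<bar>r * w * (w ^ 5 - N ^ 5) / N ^ 5\<bar> = \<bar>r * w\<bar> * \<bar>w ^ 5 - N ^ 5\<bar> / N ^ 5"
      using Npos by (simp add: abs_divide abs_mult)
    also have "\<dots> \<le> w * (5 * (2 * w) ^ 4 * \<eta>) / N ^ 5"
      using rw lip Npos by (intro divide_right_mono mult_mono) auto
    also have "\<dots> \<le> w * (5 * (2 * w) ^ 4 * \<eta>) / (w / 2) ^ 5"
      using N5 w5 eta0 w Npos by (intro divide_left_mono) auto
    also have "\<dots> = 2560 * \<eta>" using w by (simp add: field_simps eval_nat_numeral)
    finally show ?thesis .
  qed
  have "\<bar>U / N ^ 5 - w * r\<bar> \<le> \<bar>(U - w ^ 6 * r) / N ^ 5\<bar> + \<bar>r * w * (w ^ 5 - N ^ 5) / N ^ 5\<bar>"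
    unfolding split by (rule abs_triangle_ineq)
  also have "\<dots> \<le> 32 / w ^ 5 * \<eta> + 2560 * \<eta>" using b1 b2 by simp
  finally show ?thesis by (simp add: algebra_simps)
qed

lemma pmW_inst:
  assumes prob: "prob_space Qn" and sQ: "sets Qn = sets obs_space"
    and om: "treat_prob Qn = \<omega>" "0 < \<omega>" "\<omega> < 1"
  shows "pmW Qn d" and "pm.W Qn d = (if d then \<omega> else 1 - \<omega>)"
proof -
  interpret Q: prob_space Qn by fact
  have mD: "(\<lambda>u. fst (snd u)) \<in> measurable Qn (count_space UNIV)"
    unfolding measurable_cong_sets[OF sQ refl] obs_space_def by measurable
  have "(\<lambda>u. fst (snd u)) -` {True} \<inter> space Qn \<in> sets Qn" by (rule measurable_sets[OF mD]) simp
  moreover have "(\<lambda>u. fst (snd u)) -` {True} \<inter> space Qn = {u \<in> space Qn. fst (snd u)}" by auto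
  ultimately have sets: "{u \<in> space Qn. fst (snd u)} \<in> sets Qn" by simp
  have m1: "measure Qn {u \<in> space Qn. fst (snd u) = True} = \<omega>" using om by (simp add: treat_prob_def)
  have "measure Qn {u \<in> space Qn. fst (snd u) = False} = measure Qn (space Qn - {u \<in> space Qn. fst (snd u)})"
    by (intro arg_cong[where f="measure Qn"]) auto
  also have "\<dots> = 1 - \<omega>" using Q.prob_compl[OF sets] om by (simp add: treat_prob_def)
  finally have m0: "measure Qn {u \<in> space Qn. fst (snd u) = False} = 1 - \<omega>" .
  have mm: "measure Qn {u \<in> space Qn. fst (snd u) = d} = (if d then \<omega> else 1 - \<omega>)"
    using m1 m0 by (cases d) auto
  show pw: "pmW Qn d"
  proof (intro pmW.intro pm.intro pmW_axioms.intro prob sQ)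
    show "measure Qn {u \<in> space Qn. fst (snd u) = d} > 0" using mm om by auto
  qed
  interpret pmW Qn j d by (rule pw)
  show "pm.W Qn d = (if d then \<omega> else 1 - \<omega>)" using W_eq mm by (simp add: Sd_def)
qed

lemma K_mono: "0 < m \<Longrightarrow> m \<le> w \<Longrightarrow> 32 / w ^ 5 + 2560 \<le> 32 / m ^ 5 + (2560::real)"
  by (simp add: divide_left_mono power_mono mult_pos_pos)

lemma per_n:
  fixes Qn :: "obs measure" and p n :: nat and \<omega> \<epsilon> t :: real
  assumes prob: "prob_space Qn" and sQ: "sets Qn = sets obs_space"
    and om: "treat_prob Qn = \<omega>" "0 < \<omega>" "\<omega> < 1"
    and n: "n > 0" and e: "\<epsilon> > 0"
    and eta: "\<epsilon> + 30 / real n \<le> min \<omega> (1 - \<omega>) / 2"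
    and tK: "2 * (32 / min \<omega> (1 - \<omega>) ^ 5 + 2560) * (\<epsilon> + 30 / real n) < t"
  shows "\<exists>G \<in> sets (PiM {..<n} (\<lambda>_. Qn)).
           measure (PiM {..<n} (\<lambda>_. Qn)) G \<ge> 1 - (4 * real p + 2) * exp (- (\<epsilon>\<^sup>2 * real n) / 72)
         \<and> (\<forall>S\<in>G. \<forall>j<p. \<bar>cbcov2n n S j - cbcov2 Qn j\<bar> < t)"
proof -
  let ?P = "PiM {..<n} (\<lambda>_. Qn)"
  interpret P: prob_space ?P by (intro prob_space_PiM prob)
  have pmi: "pm Qn" by (intro pm.intro prob sQ)
  have pmw: "pmW Qn d" for d using pmW_inst[OF prob sQ om] by blast
  have Wd: "pm.W Qn d = (if d then \<omega> else 1 - \<omega>)" for d using pmW_inst[OF prob sQ om] by blast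
  define EN where "EN = (\<integral>S. Nfrac n S \<partial>?P)"
  have EN: "EN = \<omega>" unfolding EN_def pm.E_Nfrac[OF pmi n] using om by (simp add: treat_prob_def)
  define EU where "EU j d = (\<integral>S. Ustat d j n S \<partial>?P)" for j d
  define BN where "BN = {S \<in> space ?P. \<bar>Nfrac n S - EN\<bar> \<ge> \<epsilon>}"
  define BU where "BU jd = {S \<in> space ?P. \<bar>Ustat (snd jd) (fst jd) n S - EU (fst jd) (snd jd)\<bar> \<ge> \<epsilon>}" for jd
  have [measurable]: "Nfrac n \<in> borel_measurable ?P" by (rule pm.Nfrac_meas[OF pmi])
  have [measurable]: "Ustat d j n \<in> borel_measurable ?P" for d j by (rule pm.Ustat_meas[OF pmi])
  have BN_sets: "BN \<in> sets ?P" unfolding BN_def by measurable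
  have BU_sets: "BU jd \<in> sets ?P" for jd unfolding BU_def by measurable
  have nr: "real n > 0" using n by simp
  have bN: "measure ?P BN \<le> 2 * exp (- (\<epsilon>\<^sup>2 * real n) / 72)"
  proof -
    have "measure ?P BN \<le> 2 * exp (-2 * \<epsilon>\<^sup>2 / (real n * (1 / real n)\<^sup>2))"
      unfolding BN_def EN_def
    proof (rule mcdiarmid[OF prob _ n e _ pm.Nfrac_bound[OF pmi]])
      show "1 / real n > 0" using nr by simp
      show "\<bar>Nfrac n x - Nfrac n (x(i := y))\<bar> \<le> 1 / real n" if "i < n" for x i y
        by (rule pm.Nfrac_diff[OF pmi that])
    qed measurable
    also have "-2 * \<epsilon>\<^sup>2 / (real n * (1 / real n)\<^sup>2) = -2 * \<epsilon>\<^sup>2 * real n"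
      using nr by (simp add: field_simps power2_eq_square)
    also have "exp (-2 * \<epsilon>\<^sup>2 * real n) \<le> exp (- (\<epsilon>\<^sup>2 * real n) / 72)"
      using nr by simp
    finally show ?thesis by simp
  qed
  have bU: "measure ?P (BU jd) \<le> 2 * exp (- (\<epsilon>\<^sup>2 * real n) / 72)" for jd
  proof -
    have "measure ?P (BU jd) \<le> 2 * exp (-2 * \<epsilon>\<^sup>2 / (real n * (12 / real n)\<^sup>2))"
      unfolding BU_def EU_def
    proof (rule mcdiarmid[OF prob _ n e _ pm.Ustat_bound[OF pmi]])
      show "12 / real n > 0" using nr by simp
      show "\<bar>Ustat (snd jd) (fst jd) n x - Ustat (snd jd) (fst jd) n (x(i := y))\<bar> \<le> 12 / real n" if "i < n" for x i y
        by (rule pm.Ustat_diff[OF pmi that])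
    qed measurable
    also have "-2 * \<epsilon>\<^sup>2 / (real n * (12 / real n)\<^sup>2) = - (\<epsilon>\<^sup>2 * real n) / 72"
      using nr by (simp add: field_simps power2_eq_square)
    finally show ?thesis .
  qed
  define J where "J = {..<p} \<times> (UNIV :: bool set)"
  have finJ: "finite J" unfolding J_def by simp
  have cardJ: "card J = 2 * p" unfolding J_def by (simp add: card_cartesian_product)
  define G where "G = space ?P - (BN \<union> (\<Union>jd\<in>J. BU jd))"
  have Bad_sets: "BN \<union> (\<Union>jd\<in>J. BU jd) \<in> sets ?P"
    using BN_sets BU_sets finJ by (intro sets.Un sets.finite_UN) auto
  have G_sets: "G \<in> sets ?P" unfolding G_def using Bad_sets by auto
  have "measure ?P (BN \<union> (\<Union>jd\<in>J. BU jd)) \<le> measure ?P BN + measure ?P (\<Union>jd\<in>J. BU jd)"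
    by (rule measure_Un_le) (use BN_sets BU_sets finJ in auto)
  also have "measure ?P (\<Union>jd\<in>J. BU jd) \<le> (\<Sum>jd\<in>J. measure ?P (BU jd))"
    by (rule measure_UNION_le[OF finJ]) (use BU_sets in auto)
  also have "(\<Sum>jd\<in>J. measure ?P (BU jd)) \<le> (\<Sum>jd\<in>J. 2 * exp (- (\<epsilon>\<^sup>2 * real n) / 72))"
    by (rule sum_mono) (rule bU)
  also have "\<dots> = 4 * real p * exp (- (\<epsilon>\<^sup>2 * real n) / 72)" using cardJ by simp
  finally have bad: "measure ?P (BN \<union> (\<Union>jd\<in>J. BU jd)) \<le> (4 * real p + 2) * exp (- (\<epsilon>\<^sup>2 * real n) / 72)"
    using bN by (simp add: algebra_simps)
  have mG: "measure ?P G = 1 - measure ?P (BN \<union> (\<Union>jd\<in>J. BU jd))"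
    unfolding G_def by (rule P.prob_compl[OF Bad_sets])
  have close: "\<bar>cbcov2n n S j - cbcov2 Qn j\<bar> < t" if S: "S \<in> G" and j: "j < p" for S j
  proof -
    define \<eta> where "\<eta> = \<epsilon> + 30 / real n"
    define K where "K = 32 / min \<omega> (1 - \<omega>) ^ 5 + 2560"
    have Sp: "S \<in> space ?P" and SN: "S \<notin> BN" and SU: "\<And>d. S \<notin> BU (j, d)"
      using S j unfolding G_def J_def by auto
    have Nc: "\<bar>Nfrac n S - \<omega>\<bar> \<le> \<eta>"
    proof -
      have "\<bar>Nfrac n S - \<omega>\<bar> < \<epsilon>" using SN Sp EN unfolding BN_def by auto
      moreover have "30 / real n \<ge> 0" by simp
      ultimately show ?thesis unfolding \<eta>_def by linarith
    qed
    have Uc: "\<bar>Ustat d j n S - pm.W Qn d ^ 6 * bcov2 (cond_law Qn j d)\<bar> \<le> \<eta>" for d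
    proof -
      have "\<bar>Ustat d j n S - EU j d\<bar> < \<epsilon>" using SU[of d] Sp unfolding BU_def by auto
      moreover have "\<bar>EU j d - pm.W Qn d ^ 6 * bcov2 (cond_law Qn j d)\<bar> \<le> 30 / real n"
        unfolding EU_def by (rule pmW.E_Ustat[OF pmw n])
      ultimately show ?thesis unfolding \<eta>_def by linarith
    qed
    have mpos: "min \<omega> (1 - \<omega>) > 0" using om by simp
    have r1: "\<bar>Ustat True j n S / Nfrac n S ^ 5 - \<omega> * bcov2 (cond_law Qn j True)\<bar> \<le> K * \<eta>"
    proof -
      have "\<bar>Ustat True j n S / Nfrac n S ^ 5 - \<omega> * bcov2 (cond_law Qn j True)\<bar> \<le> (32 / \<omega> ^ 5 + 2560) * \<eta>"
      proof (rule ratio_bound)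
        show "0 < \<omega>" "\<omega> \<le> 1" using om by auto
        show "0 \<le> bcov2 (cond_law Qn j True)" "bcov2 (cond_law Qn j True) \<le> 1"
          using pmW.bcov2_bounds[OF pmw] by auto
        show "\<bar>Nfrac n S - \<omega>\<bar> \<le> \<eta>" by (rule Nc)
        show "\<bar>Ustat True j n S - \<omega> ^ 6 * bcov2 (cond_law Qn j True)\<bar> \<le> \<eta>" using Uc[of True] Wd[of True] by simp
        show "\<eta> \<le> \<omega> / 2" using eta unfolding \<eta>_def by simp
      qed
      also have "\<dots> \<le> K * \<eta>" unfolding K_def
        by (intro mult_right_mono K_mono mpos) (use e nr in \<open>auto simp: \<eta>_def\<close>)
      finally show ?thesis .
    qed
    have r0: "\<bar>Ustat False j n S / (1 - Nfrac n S) ^ 5 - (1 - \<omega>) * bcov2 (cond_law Qn j False)\<bar> \<le> K * \<eta>"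
    proof -
      have "\<bar>Ustat False j n S / (1 - Nfrac n S) ^ 5 - (1 - \<omega>) * bcov2 (cond_law Qn j False)\<bar> \<le> (32 / (1 - \<omega>) ^ 5 + 2560) * \<eta>"
      proof (rule ratio_bound)
        show "0 < 1 - \<omega>" "1 - \<omega> \<le> 1" using om by auto
        show "0 \<le> bcov2 (cond_law Qn j False)" "bcov2 (cond_law Qn j False) \<le> 1"
          using pmW.bcov2_bounds[OF pmw] by auto
        show "\<bar>(1 - Nfrac n S) - (1 - \<omega>)\<bar> \<le> \<eta>" using Nc by (simp add: abs_minus_commute)
        show "\<bar>Ustat False j n S - (1 - \<omega>) ^ 6 * bcov2 (cond_law Qn j False)\<bar> \<le> \<eta>" using Uc[of False] Wd[of False] by simp
        show "\<eta> \<le> (1 - \<omega>) / 2" using eta unfolding \<eta>_def by simp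
      qed
      also have "\<dots> \<le> K * \<eta>" unfolding K_def
        by (intro mult_right_mono K_mono mpos) (use e nr in \<open>auto simp: \<eta>_def\<close>)
      finally show ?thesis .
    qed
    have "cbcov2n n S j - cbcov2 Qn j =
      (Ustat True j n S / Nfrac n S ^ 5 - \<omega> * bcov2 (cond_law Qn j True)) +
      (Ustat False j n S / (1 - Nfrac n S) ^ 5 - (1 - \<omega>) * bcov2 (cond_law Qn j False))"
      unfolding cbcov2n_eq[OF n] cbcov2_def om(1) by simp
    hence "\<bar>cbcov2n n S j - cbcov2 Qn j\<bar> \<le> K * \<eta> + K * \<eta>" using r1 r0 by linarith
    also have "\<dots> = 2 * K * \<eta>" by simp
    also have "\<dots> < t" using tK unfolding K_def \<eta>_def .
    finally show ?thesis .
  qed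
  show ?thesis
  proof (intro bexI[OF _ G_sets] conjI ballI allI impI)
    show "1 - (4 * real p + 2) * exp (- (\<epsilon>\<^sup>2 * real n) / 72) \<le> measure ?P G" using mG bad by simp
  qed (rule close)
qed

lemma real_powr_at_top':
  assumes "(p::real) > 0"
  shows   "filterlim (\<lambda>x. x powr p) at_top at_top"
proof (subst filterlim_cong[OF refl refl])
  show "LIM x at_top. exp (p * ln x) :> at_top"
    by (rule filterlim_compose[OF exp_at_top filterlim_tendsto_pos_mult_at_top[OF tendsto_const]])
       (simp_all add: ln_at_top assms)
  show "eventually (\<lambda>x. x powr p = exp (p * ln x)) at_top"
    using eventually_gt_at_top[of 0] by eventually_elim (simp add: powr_def)
qed

lemma nat_powr_at_top: "(\<alpha>::real) > 0 \<Longrightarrow> filterlim (\<lambda>n::nat. real n powr \<alpha>) at_top sequentially"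
  by (rule filterlim_compose[OF real_powr_at_top' filterlim_real_sequentially])

lemma lim_exp_powr:
  assumes b: "b > 0" and a: "(\<alpha>::real) > 0"
  shows "(\<lambda>n::nat. exp (- b * real n powr \<alpha>)) \<longlonglongrightarrow> 0"
proof -
  have "filterlim (\<lambda>n::nat. (- b) * real n powr \<alpha>) at_bot sequentially"
    by (rule filterlim_tendsto_neg_mult_at_bot[OF tendsto_const _ nat_powr_at_top[OF a]]) (use b in simp)
  from filterlim_compose[OF exp_at_bot this] show ?thesis by simp
qed

lemma lim_bn:
  fixes p :: "nat \<Rightarrow> nat"
  assumes a: "a > 0" and al: "(\<alpha>::real) > 0"
    and o: "(\<lambda>n. ln (real (p n))) \<in> o(\<lambda>n. real n powr \<alpha>)"
  shows "(\<lambda>n. (4 * real (p n) + 2) * exp (- a * real n powr \<alpha>)) \<longlonglongrightarrow> 0"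
proof (rule tendsto_sandwich[where f="\<lambda>_. 0" and h="\<lambda>n. 6 * exp (- (a/2) * real n powr \<alpha>)"])
  show "eventually (\<lambda>n. 0 \<le> (4 * real (p n) + 2) * exp (- a * real n powr \<alpha>)) sequentially" by simp
  have ev: "eventually (\<lambda>n. norm (ln (real (p n))) \<le> (a/2) * norm (real n powr \<alpha>)) sequentially"
    by (rule landau_o.smallD[OF o]) (use a in simp)
  show "eventually (\<lambda>n. (4 * real (p n) + 2) * exp (- a * real n powr \<alpha>) \<le> 6 * exp (- (a/2) * real n powr \<alpha>)) sequentially"
    using ev
  proof eventually_elim
    case (elim n)
    define x where "x = real n powr \<alpha>"
    have x: "x \<ge> 0" by (simp add: x_def)
    have pb: "real (p n) \<le> exp ((a/2) * x)"
    proof (cases "p n = 0")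
      case True thus ?thesis by simp
    next
      case False
      hence "real (p n) = exp (ln (real (p n)))" by simp
      also have "\<dots> \<le> exp ((a/2) * x)" using elim by (simp add: x_def)
      finally show ?thesis .
    qed
    have one: "1 \<le> exp ((a/2) * x)" using a x by simp
    have "4 * real (p n) + 2 \<le> 6 * exp ((a/2) * x)" using pb one by linarith
    hence "(4 * real (p n) + 2) * exp (- a * x) \<le> 6 * exp ((a/2) * x) * exp (- a * x)"
      by (intro mult_right_mono) auto
    also have "\<dots> = 6 * exp (- (a/2) * x)" by (simp add: mult.assoc exp_add[symmetric])
    finally show ?case by (simp add: x_def)
  qed
  show "(\<lambda>n. 6 * exp (- (a/2) * real n powr \<alpha>)) \<longlonglongrightarrow> 0"
    using tendsto_mult_right_zero[OF lim_exp_powr[of "a/2" \<alpha>]] a al by simp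
qed simp

lemma events_logic:
  fixes r \<rho> :: "nat \<Rightarrow> real"
  assumes t: "t > 0" and A: "A \<subseteq> {..<p}" and A1: "\<And>j. j \<in> A \<Longrightarrow> \<rho> j \<ge> 2 * t"
    and Wc: "card {j\<in>{..<p}. \<rho> j \<noteq> 0} \<le> q"
    and close: "\<And>j. j < p \<Longrightarrow> \<bar>r j - \<rho> j\<bar> < t"
  shows "\<forall>i\<in>{j\<in>{..<p}. \<rho> j = 0}. \<forall>j\<in>A. r i < r j"
    and "\<forall>K. top_set r p q K \<longrightarrow> A \<subseteq> K"
proof -
  show E1: "\<forall>i\<in>{j\<in>{..<p}. \<rho> j = 0}. \<forall>j\<in>A. r i < r j"
  proof (intro ballI)
    fix i j assume i: "i \<in> {j\<in>{..<p}. \<rho> j = 0}" and j: "j \<in> A"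
    have ip: "i < p" "\<rho> i = 0" using i by auto
    have "r i < t" using close[OF ip(1)] ip(2) by (simp add: abs_less_iff)
    moreover have jp: "j < p" using j A by auto
    have "r j > t" using close[OF jp] A1[OF j] by (simp add: abs_less_iff)
    ultimately show "r i < r j" by simp
  qed
  show "\<forall>K. top_set r p q K \<longrightarrow> A \<subseteq> K"
  proof (intro allI impI subsetI)
    fix K j assume K: "top_set r p q K" and j: "j \<in> A"
    show "j \<in> K"
    proof (rule ccontr)
    assume jK: "j \<notin> K"
    have Kp: "K \<subseteq> {..<p}" "card K = q" and Kt: "\<And>k i. k \<in> K \<Longrightarrow> i \<in> {..<p} - K \<Longrightarrow> r i \<le> r k"
      using K unfolding top_set_def by auto
    have jp: "j \<in> {..<p} - K" using j A jK by auto
    have KW: "K \<subseteq> {j\<in>{..<p}. \<rho> j \<noteq> 0}"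
    proof
      fix k assume k: "k \<in> K"
      have rjk: "r j \<le> r k" by (rule Kt[OF k jp])
      have kp: "k < p" using k Kp by auto
      have "\<rho> k \<noteq> 0"
      proof
        assume "\<rho> k = 0"
        hence "k \<in> {j\<in>{..<p}. \<rho> j = 0}" using kp by simp
        hence "r k < r j" using E1 j by blast
        thus False using rjk by simp
      qed
      thus "k \<in> {j\<in>{..<p}. \<rho> j \<noteq> 0}" using kp by simp
    qed
    have fin: "finite {j\<in>{..<p}. \<rho> j \<noteq> 0}" by simp
    have "K = {j\<in>{..<p}. \<rho> j \<noteq> 0}"
      by (rule card_subset_eq[OF fin KW]) (use card_mono[OF fin KW] Wc Kp in linarith)
    moreover have "j \<in> {j\<in>{..<p}. \<rho> j \<noteq> 0}" using A1[OF j] t j A by auto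
    ultimately show False using jK by simp
  qed
  qed
qed

lemma cbcov2n_meas:
  assumes prob: "prob_space Qn" and sQ: "sets Qn = sets obs_space" and n: "n > 0"
  shows "(\<lambda>S. cbcov2n n S j) \<in> borel_measurable (PiM {..<n} (\<lambda>_. Qn))"
proof -
  have pmi: "pm Qn" by (intro pm.intro prob sQ)
  have [measurable]: "Nfrac n \<in> borel_measurable (PiM {..<n} (\<lambda>_. Qn))" by (rule pm.Nfrac_meas[OF pmi])
  have [measurable]: "Ustat d j n \<in> borel_measurable (PiM {..<n} (\<lambda>_. Qn))" for d by (rule pm.Ustat_meas[OF pmi])
  have "(\<lambda>S. cbcov2n n S j) = (\<lambda>S. Ustat True j n S / Nfrac n S ^ 5 + Ustat False j n S / (1 - Nfrac n S) ^ 5)"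
    by (rule ext) (rule cbcov2n_eq[OF n])
  also have "\<dots> \<in> borel_measurable (PiM {..<n} (\<lambda>_. Qn))" by measurable
  finally show ?thesis .
qed

lemma ev1_sets:
  assumes prob: "prob_space Qn" and sQ: "sets Qn = sets obs_space" and n: "n > 0"
    and fin: "finite W" "finite A"
  shows "{S \<in> space (PiM {..<n} (\<lambda>_. Qn)). \<forall>i\<in>W. \<forall>j\<in>A. cbcov2n n S i < cbcov2n n S j} \<in> sets (PiM {..<n} (\<lambda>_. Qn))"
proof -
  have [measurable]: "(\<lambda>S. cbcov2n n S j) \<in> borel_measurable (PiM {..<n} (\<lambda>_. Qn))" for j
    by (rule cbcov2n_meas[OF prob sQ n])
  show ?thesis using fin by measurable
qed

lemma top_set_iff:
  "(\<forall>K. top_set r p q K \<longrightarrow> A \<subseteq> K) \<longleftrightarrow>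
   (\<forall>K\<in>Pow {..<p}. (card K = q \<and> (\<forall>j\<in>K. \<forall>i\<in>{..<p} - K. r i \<le> r j)) \<longrightarrow> A \<subseteq> K)"
proof
  assume h: "\<forall>K. top_set r p q K \<longrightarrow> A \<subseteq> K"
  show "\<forall>K\<in>Pow {..<p}. (card K = q \<and> (\<forall>j\<in>K. \<forall>i\<in>{..<p} - K. r i \<le> r j)) \<longrightarrow> A \<subseteq> K"
  proof (intro ballI impI)
    fix K assume "K \<in> Pow {..<p}" "card K = q \<and> (\<forall>j\<in>K. \<forall>i\<in>{..<p} - K. r i \<le> r j)"
    hence "top_set r p q K" unfolding top_set_def by simp
    thus "A \<subseteq> K" using h by simp
  qed
next
  assume h: "\<forall>K\<in>Pow {..<p}. (card K = q \<and> (\<forall>j\<in>K. \<forall>i\<in>{..<p} - K. r i \<le> r j)) \<longrightarrow> A \<subseteq> K"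
  show "\<forall>K. top_set r p q K \<longrightarrow> A \<subseteq> K"
  proof (intro allI impI)
    fix K assume "top_set r p q K"
    hence "K \<in> Pow {..<p}" "card K = q \<and> (\<forall>j\<in>K. \<forall>i\<in>{..<p} - K. r i \<le> r j)" unfolding top_set_def by auto
    thus "A \<subseteq> K" using h by blast
  qed
qed

lemma ev2_sets:
  assumes prob: "prob_space Qn" and sQ: "sets Qn = sets obs_space" and n: "n > 0"
  shows "{S \<in> space (PiM {..<n} (\<lambda>_. Qn)). \<forall>K. top_set (cbcov2n n S) p q K \<longrightarrow> A \<subseteq> K} \<in> sets (PiM {..<n} (\<lambda>_. Qn))"
proof -
  let ?P = "PiM {..<n} (\<lambda>_. Qn)"
  have [measurable]: "(\<lambda>S. cbcov2n n S j) \<in> borel_measurable ?P" for j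
    by (rule cbcov2n_meas[OF prob sQ n])
  have le_sets: "{S \<in> space ?P. cbcov2n n S i \<le> cbcov2n n S j} \<in> sets ?P" for i j by measurable
  have inner: "{S \<in> space ?P. \<forall>j\<in>K. \<forall>i\<in>{..<p} - K. cbcov2n n S i \<le> cbcov2n n S j} \<in> sets ?P"
    if K: "K \<in> Pow {..<p}" for K
  proof -
    have fK: "finite K" using K by (auto intro: finite_subset)
    show ?thesis
    proof (rule sets.sets_Collect_finite_All[OF _ fK])
      fix j assume "j \<in> K"
      show "{S \<in> space ?P. \<forall>i\<in>{..<p} - K. cbcov2n n S i \<le> cbcov2n n S j} \<in> sets ?P"
        by (rule sets.sets_Collect_finite_All[OF le_sets]) simp
    qed
  qed
  have each: "{S \<in> space ?P. (card K = q \<and> (\<forall>j\<in>K. \<forall>i\<in>{..<p} - K. cbcov2n n S i \<le> cbcov2n n S j)) \<longrightarrow> A \<subseteq> K} \<in> sets ?P"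
    if K: "K \<in> Pow {..<p}" for K
  proof (cases "card K = q \<and> \<not> A \<subseteq> K")
    case True
    hence "{S \<in> space ?P. (card K = q \<and> (\<forall>j\<in>K. \<forall>i\<in>{..<p} - K. cbcov2n n S i \<le> cbcov2n n S j)) \<longrightarrow> A \<subseteq> K}
        = space ?P - {S \<in> space ?P. \<forall>j\<in>K. \<forall>i\<in>{..<p} - K. cbcov2n n S i \<le> cbcov2n n S j}" by auto
    thus ?thesis using inner[OF K] by auto
  next
    case False
    hence "{S \<in> space ?P. (card K = q \<and> (\<forall>j\<in>K. \<forall>i\<in>{..<p} - K. cbcov2n n S i \<le> cbcov2n n S j)) \<longrightarrow> A \<subseteq> K}
        = space ?P" by auto
    thus ?thesis by simp
  qed
  have "{S \<in> space ?P. \<forall>K\<in>Pow {..<p}. (card K = q \<and> (\<forall>j\<in>K. \<forall>i\<in>{..<p} - K. cbcov2n n S i \<le> cbcov2n n S j)) \<longrightarrow> A \<subseteq> K} \<in> sets ?P"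
    by (rule sets.sets_Collect_finite_All[OF each]) simp_all
  thus ?thesis unfolding top_set_iff .
qed

lemma powr_neg_le1: "n > 0 \<Longrightarrow> \<kappa> \<ge> 0 \<Longrightarrow> real n powr (- \<kappa>) \<le> 1"
proof -
  assume n: "n > 0" and k: "\<kappa> \<ge> 0"
  have "1 \<le> real n powr \<kappa>" using n k by (intro ge_one_powr_ge_zero) auto
  thus ?thesis using n by (simp add: powr_minus divide_le_eq_1 field_simps)
qed

lemma sandwich_one:
  fixes m b :: "nat \<Rightarrow> real"
  assumes ev: "eventually (\<lambda>n. 1 - b n \<le> m n) sequentially" and le: "\<And>n. m n \<le> 1"
    and b: "b \<longlonglongrightarrow> 0"
  shows "m \<longlonglongrightarrow> 1"
proof (rule tendsto_sandwich[OF ev _ _ tendsto_const])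
  show "eventually (\<lambda>n. m n \<le> 1) sequentially" using le by simp
  show "(\<lambda>n. 1 - b n) \<longlonglongrightarrow> 1" using tendsto_diff[OF tendsto_const b, of 1] by simp
qed

theorem theorem1:
  fixes Q :: "nat \<Rightarrow> obs measure"
    and p q :: "nat \<Rightarrow> nat"
    and C P :: "nat \<Rightarrow> nat set"
    and \<omega> c \<kappa> :: real
  assumes prob: "\<And>n. prob_space (Q n)"
    and sets_Q: "\<And>n. sets (Q n) = sets obs_space"
    and omega: "\<And>n. treat_prob (Q n) = \<omega>" "0 < \<omega>" "\<omega> < 1"
    and CP_sub: "\<And>n. C n \<subseteq> {..<p n}" "\<And>n. P n \<subseteq> {..<p n}"
    and c_pos: "c > 0" and kappa: "0 \<le> \<kappa>" "\<kappa> < 1/2"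
    and A1: "\<And>n j. j \<in> C n \<union> P n \<Longrightarrow> cbcov2 (Q n) j \<ge> 2 * c * real n powr (- \<kappa>)"
    and A2: "(\<lambda>n. ln (real (p n))) \<in> o(\<lambda>n. real n powr (1 - 2 * \<kappa>))"
    and Wc: "\<And>n. card {j\<in>{..<p n}. cbcov2 (Q n) j \<noteq> 0} \<le> q n"
  shows "(\<lambda>n. measure (PiM {..<n} (\<lambda>_. Q n))
            {S \<in> space (PiM {..<n} (\<lambda>_. Q n)).
               \<forall>i\<in>{j\<in>{..<p n}. cbcov2 (Q n) j = 0}. \<forall>j\<in>C n \<union> P n.
                 cbcov2n n S i < cbcov2n n S j}) \<longlonglongrightarrow> 1
       \<and> (\<lambda>n. measure (PiM {..<n} (\<lambda>_. Q n))
            {S \<in> space (PiM {..<n} (\<lambda>_. Q n)).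
               \<forall>K. top_set (cbcov2n n S) (p n) (q n) K \<longrightarrow> C n \<union> P n \<subseteq> K}) \<longlonglongrightarrow> 1"
proof -
  define wm where "wm = min \<omega> (1 - \<omega>)"
  define K where "K = 32 / wm ^ 5 + 2560"
  define \<delta> where "\<delta> = min (c / (8 * K)) (wm / 4)"
  define a where "a = \<delta>\<^sup>2 / 72"
  define \<alpha> where "\<alpha> = 1 - 2 * \<kappa>"
  define b where "b n = (4 * real (p n) + 2) * exp (- a * real n powr \<alpha>)" for n
  have wm: "wm > 0" using omega unfolding wm_def by simp
  have K: "K > 0"
  proof -
    have "32 / wm ^ 5 > 0" using wm by simp
    thus ?thesis unfolding K_def by linarith
  qed
  have \<delta>: "\<delta> > 0" unfolding \<delta>_def using c_pos K wm by simp
  have a: "a > 0" unfolding a_def using \<delta> by simp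
  have al: "\<alpha> > 0" unfolding \<alpha>_def using kappa by simp
  have b0: "b \<longlonglongrightarrow> 0" unfolding b_def by (rule lim_bn[OF a al]) (use A2 in \<open>simp add: \<alpha>_def\<close>)
  define E1 where "E1 n = {S \<in> space (PiM {..<n} (\<lambda>_. Q n)).
               \<forall>i\<in>{j\<in>{..<p n}. cbcov2 (Q n) j = 0}. \<forall>j\<in>C n \<union> P n. cbcov2n n S i < cbcov2n n S j}" for n
  define E2 where "E2 n = {S \<in> space (PiM {..<n} (\<lambda>_. Q n)).
               \<forall>K. top_set (cbcov2n n S) (p n) (q n) K \<longrightarrow> C n \<union> P n \<subseteq> K}" for n
  have ev_n: "eventually (\<lambda>n. n > 0) sequentially" by (rule eventually_gt_at_top)
  have ev_30: "eventually (\<lambda>n. 30 / real n \<le> wm / 4) sequentially"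
  proof -
    have "eventually (\<lambda>n. n \<ge> nat \<lceil>120 / wm\<rceil> + 1) sequentially" by (rule eventually_ge_at_top)
    thus ?thesis
    proof eventually_elim
      case (elim n)
      hence "real n \<ge> 120 / wm" by linarith
      hence "real n * wm \<ge> 120" using wm by (simp add: field_simps)
      moreover have "real n > 0" using elim by simp
      ultimately show ?case using wm by (simp add: field_simps)
    qed
  qed
  have ev_pow: "eventually (\<lambda>n. real n powr (\<kappa> - 1) < c / (80 * K)) sequentially"
  proof -
    have "(\<lambda>n. real n powr (\<kappa> - 1)) \<longlonglongrightarrow> 0"
      by (rule tendsto_neg_powr[OF _ filterlim_real_sequentially]) (use kappa in simp)
    moreover have "c / (80 * K) > 0" using c_pos K by simp
    ultimately show ?thesis by (rule order_tendstoD(2))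
  qed
  have main: "1 - b n \<le> measure (PiM {..<n} (\<lambda>_. Q n)) (E1 n) \<and> 1 - b n \<le> measure (PiM {..<n} (\<lambda>_. Q n)) (E2 n)"
    if n: "n > 0" and n30: "30 / real n \<le> wm / 4" and npow: "real n powr (\<kappa> - 1) < c / (80 * K)" for n
  proof -
    define \<epsilon> where "\<epsilon> = \<delta> * real n powr (- \<kappa>)"
    define t where "t = c * real n powr (- \<kappa>)"
    have nr: "real n > 0" using n by simp
    have pk: "real n powr (- \<kappa>) > 0" using nr by simp
    have pk1: "real n powr (- \<kappa>) \<le> 1" by (rule powr_neg_le1[OF n kappa(1)])
    have e: "\<epsilon> > 0" unfolding \<epsilon>_def using \<delta> pk by simp
    have t: "t > 0" unfolding t_def using c_pos pk by simp
    have eta: "\<epsilon> + 30 / real n \<le> min \<omega> (1 - \<omega>) / 2"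
    proof -
      have "\<epsilon> \<le> \<delta>" unfolding \<epsilon>_def using \<delta> pk1 by (simp add: mult_left_le)
      also have "\<delta> \<le> wm / 4" unfolding \<delta>_def by simp
      finally show ?thesis using n30 unfolding wm_def by simp
    qed
    have tK: "2 * (32 / min \<omega> (1 - \<omega>) ^ 5 + 2560) * (\<epsilon> + 30 / real n) < t"
    proof -
      have inv: "1 / real n = real n powr (\<kappa> - 1) * real n powr (- \<kappa>)"
      proof -
        have "real n powr (\<kappa> - 1) * real n powr (- \<kappa>) = real n powr ((\<kappa> - 1) + (- \<kappa>))"
          by (rule powr_add[symmetric])
        also have "(\<kappa> - 1) + (- \<kappa>) = - 1" by simp
        also have "real n powr (- 1) = 1 / real n" using nr by (simp add: powr_minus divide_inverse)
        finally show ?thesis by simp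
      qed
      have dl: "\<delta> \<le> c / (8 * K)" unfolding \<delta>_def by simp
      have "2 * K * \<epsilon> = (2 * K * \<delta>) * real n powr (- \<kappa>)" unfolding \<epsilon>_def by simp
      also have "\<dots> \<le> 2 * K * (c / (8 * K)) * real n powr (- \<kappa>)"
        using dl K pk by (intro mult_right_mono mult_left_mono) auto
      also have "\<dots> = c / 4 * real n powr (- \<kappa>)" using K by simp
      finally have p1: "2 * K * \<epsilon> \<le> c / 4 * real n powr (- \<kappa>)" .
      have "2 * K * (30 / real n) = 60 * K * (1 / real n)" by simp
      also have "\<dots> = 60 * K * (real n powr (\<kappa> - 1) * real n powr (- \<kappa>))" by (simp only: inv)
      also have "\<dots> = 60 * K * real n powr (\<kappa> - 1) * real n powr (- \<kappa>)" by (simp only: mult.assoc)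
      finally have "2 * K * (30 / real n) = 60 * K * real n powr (\<kappa> - 1) * real n powr (- \<kappa>)" .
      also have "\<dots> < 60 * K * (c / (80 * K)) * real n powr (- \<kappa>)"
        using npow K pk by (intro mult_strict_right_mono mult_strict_left_mono) auto
      also have "\<dots> = 3 * c / 4 * real n powr (- \<kappa>)" using K by simp
      finally have p2: "2 * K * (30 / real n) < 3 * c / 4 * real n powr (- \<kappa>)" .
      have sp: "2 * K * (\<epsilon> + 30 / real n) = 2 * K * \<epsilon> + 2 * K * (30 / real n)" by (simp only: distrib_left)
      have ct: "c / 4 * real n powr (- \<kappa>) + 3 * c / 4 * real n powr (- \<kappa>) = t" unfolding t_def by (simp add: field_simps)
      have "2 * K * (\<epsilon> + 30 / real n) < t" unfolding sp using p1 p2 ct by linarith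
      thus ?thesis unfolding K_def wm_def by simp
    qed
    have ex: "\<exists>G \<in> sets (PiM {..<n} (\<lambda>_. Q n)).
           measure (PiM {..<n} (\<lambda>_. Q n)) G \<ge> 1 - (4 * real (p n) + 2) * exp (- (\<epsilon>\<^sup>2 * real n) / 72)
         \<and> (\<forall>S\<in>G. \<forall>j<p n. \<bar>cbcov2n n S j - cbcov2 (Q n) j\<bar> < t)"
      by (rule per_n[OF prob sets_Q omega n e eta tK])
    from ex obtain G where G: "G \<in> sets (PiM {..<n} (\<lambda>_. Q n))"
      and GG: "measure (PiM {..<n} (\<lambda>_. Q n)) G \<ge> 1 - (4 * real (p n) + 2) * exp (- (\<epsilon>\<^sup>2 * real n) / 72)
         \<and> (\<forall>S\<in>G. \<forall>j<p n. \<bar>cbcov2n n S j - cbcov2 (Q n) j\<bar> < t)" ..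
    have mG: "measure (PiM {..<n} (\<lambda>_. Q n)) G \<ge> 1 - (4 * real (p n) + 2) * exp (- (\<epsilon>\<^sup>2 * real n) / 72)"
      using GG by (rule conjunct1)
    have cl: "\<And>S j. S \<in> G \<Longrightarrow> j < p n \<Longrightarrow> \<bar>cbcov2n n S j - cbcov2 (Q n) j\<bar> < t"
      using GG by simp
    have expo: "\<epsilon>\<^sup>2 * real n / 72 = a * real n powr \<alpha>"
    proof -
      have "\<epsilon>\<^sup>2 * real n = \<delta>\<^sup>2 * (real n powr (- \<kappa>) * real n powr (- \<kappa>) * real n powr 1)"
        unfolding \<epsilon>_def using nr by (simp add: power2_eq_square algebra_simps)
      also have "real n powr (- \<kappa>) * real n powr (- \<kappa>) * real n powr 1 = real n powr ((- \<kappa>) + (- \<kappa>) + 1)"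
        by (simp only: powr_add)
      also have "(- \<kappa>) + (- \<kappa>) + 1 = \<alpha>" unfolding \<alpha>_def by simp
      finally show ?thesis unfolding a_def by simp
    qed
    have mG': "measure (PiM {..<n} (\<lambda>_. Q n)) G \<ge> 1 - b n"
      using mG unfolding b_def by (simp add: expo[symmetric])
    have Gsp: "G \<subseteq> space (PiM {..<n} (\<lambda>_. Q n))" using G by (rule sets.sets_into_space)
    have logic: "S \<in> E1 n \<and> S \<in> E2 n" if S: "S \<in> G" for S
    proof -
      have A: "C n \<union> P n \<subseteq> {..<p n}" using CP_sub by auto
      have A1': "\<And>j. j \<in> C n \<union> P n \<Longrightarrow> cbcov2 (Q n) j \<ge> 2 * t"
        using A1 unfolding t_def by (simp add: mult.assoc)
      note L = events_logic[OF t A A1' Wc cl[OF S]]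
      show ?thesis unfolding E1_def E2_def using L S Gsp by auto
    qed
    have fin: "finite {j\<in>{..<p n}. cbcov2 (Q n) j = 0}" "finite (C n \<union> P n)"
      using finite_subset[OF CP_sub(1)[of n]] finite_subset[OF CP_sub(2)[of n]] by auto
    have s1: "E1 n \<in> sets (PiM {..<n} (\<lambda>_. Q n))" unfolding E1_def by (rule ev1_sets[OF prob sets_Q n fin])
    have s2: "E2 n \<in> sets (PiM {..<n} (\<lambda>_. Q n))" unfolding E2_def by (rule ev2_sets[OF prob sets_Q n])
    interpret PP: prob_space "PiM {..<n} (\<lambda>_. Q n)" by (intro prob_space_PiM prob)
    have sub1: "G \<subseteq> E1 n" and sub2: "G \<subseteq> E2 n" using logic by auto
    have "measure (PiM {..<n} (\<lambda>_. Q n)) G \<le> measure (PiM {..<n} (\<lambda>_. Q n)) (E1 n)"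
      by (rule PP.finite_measure_mono[OF sub1 s1])
    moreover have "measure (PiM {..<n} (\<lambda>_. Q n)) G \<le> measure (PiM {..<n} (\<lambda>_. Q n)) (E2 n)"
      by (rule PP.finite_measure_mono[OF sub2 s2])
    ultimately show ?thesis using mG' by linarith
  qed
  have ev: "eventually (\<lambda>n. 1 - b n \<le> measure (PiM {..<n} (\<lambda>_. Q n)) (E1 n) \<and> 1 - b n \<le> measure (PiM {..<n} (\<lambda>_. Q n)) (E2 n)) sequentially"
    using ev_n ev_30 ev_pow by eventually_elim (rule main)
  have le1: "measure (PiM {..<n} (\<lambda>_. Q n)) X \<le> 1" for n X
  proof -
    interpret PP: prob_space "PiM {..<n} (\<lambda>_. Q n)" by (intro prob_space_PiM prob)
    show ?thesis by simp
  qed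
  have "(\<lambda>n. measure (PiM {..<n} (\<lambda>_. Q n)) (E1 n)) \<longlonglongrightarrow> 1"
    by (rule sandwich_one[OF _ le1 b0]) (use ev in \<open>auto elim: eventually_mono\<close>)
  moreover have "(\<lambda>n. measure (PiM {..<n} (\<lambda>_. Q n)) (E2 n)) \<longlonglongrightarrow> 1"
    by (rule sandwich_one[OF _ le1 b0]) (use ev in \<open>auto elim: eventually_mono\<close>)
  ultimately show ?thesis unfolding E1_def E2_def by simp
qed

end
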